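(* Let $\mathcal{X},\mathcal{Y}$ be finite sets with $2\le|\mathcal{X}|,|\mathcal{Y}|<\infty$ and $P_{X,Y}$ a joint pmf on $\mathcal{X}\times\mathcal{Y}$ with $P_X(x)>0$ for all $x$ and $P_Y(y)>0$ for all $y$. If $(X_1,Y_1),\dots,(X_n,Y_n)$ are i.i.d. with joint pmf $P_{X,Y}$, then $$\eta_{\chi^2}(P_{X_1^n},P_{Y_1^n|X_1^n})\le\eta_{\mathrm{KL}}(P_{X_1^n},P_{Y_1^n|X_1^n})\le\frac{2\,\eta_{\chi^2}(P_{X_1^n},P_{Y_1^n|X_1^n})}{\phi\!\left(\max_{A\subseteq\mathcal{X}}\pi(A)\right)\min_{x\in\mathcal{X}}P_X(x)},$$ where $\pi(A)=\min\{P_X(A),1-P_X(A)\}$ for $A\subseteq\mathcal{X}$, and $\phi:[0,\tfrac12]\to\mathbb{R}$ is $\phi(p)=\frac{1}{1-2p}\log\frac{1-p}{p}$ for $p\in[0,\tfrac12)$ and $\phi(\tfrac12)=2$.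
   Context: $X_1^n=(X_1,\dots,X_n)$, $Y_1^n=(Y_1,\dots,Y_n)$, $P_X(A)=\sum_{x\in A}P_X(x)$. For a pair of finite-valued random variables $(U,V)$ with channel matrix $W$ of $P_{V|U}$ (column $u$ equal to $P_{V|U=u}$), the contraction coefficient for a divergence $D_\bullet$ is $\eta_\bullet(P_U,P_{V|U})=\sup\{D_\bullet(WR_U\|WP_U)/D_\bullet(R_U\|P_U): R_U \text{ a pmf},\ 0<D_\bullet(R_U\|P_U)<\infty\}$. $\eta_{\mathrm{KL}}$ uses the KL divergence $D(R\|P)=\sum R\log(R/P)$ (natural log) and $\eta_{\chi^2}$ uses $\chi^2(R\|P)=\sum (R-P)^2/P$. *)

theory Defs
  imports Complex_Main
begin

definition is_pmf :: "'a set \<Rightarrow> ('a \<Rightarrow> real) \<Rightarrow> bool" where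
  "is_pmf S R \<longleftrightarrow> (\<forall>u\<in>S. 0 \<le> R u) \<and> sum R S = 1"

text \<open>Absolute continuity R << P on S; for finite S this is exactly the condition
  that D(R||P) (resp. chi^2(R||P)) is finite.\<close>
definition abs_cont :: "'a set \<Rightarrow> ('a \<Rightarrow> real) \<Rightarrow> ('a \<Rightarrow> real) \<Rightarrow> bool" where
  "abs_cont S R P \<longleftrightarrow> (\<forall>u\<in>S. P u = 0 \<longrightarrow> R u = 0)"

text \<open>KL divergence (natural log, convention 0 log 0 = 0), meaningful when abs_cont holds.\<close>
definition kl_div :: "'a set \<Rightarrow> ('a \<Rightarrow> real) \<Rightarrow> ('a \<Rightarrow> real) \<Rightarrow> real" where
  "kl_div S R P = (\<Sum>u\<in>S. if R u = 0 then 0 else R u * ln (R u / P u))"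

text \<open>chi^2 divergence, meaningful when abs_cont holds (terms with P u = 0 then vanish).\<close>
definition chi2_div :: "'a set \<Rightarrow> ('a \<Rightarrow> real) \<Rightarrow> ('a \<Rightarrow> real) \<Rightarrow> real" where
  "chi2_div S R P = (\<Sum>u\<in>S. (R u - P u)\<^sup>2 / P u)"

text \<open>Output distribution W R of channel W (W u v = P(V=v | U=u)) with input pmf R on S.\<close>
definition chan_out :: "'a set \<Rightarrow> ('a \<Rightarrow> 'b \<Rightarrow> real) \<Rightarrow> ('a \<Rightarrow> real) \<Rightarrow> 'b \<Rightarrow> real" where
  "chan_out S W R v = (\<Sum>u\<in>S. W u v * R u)"

definition eta_KL :: "'a set \<Rightarrow> 'b set \<Rightarrow> ('a \<Rightarrow> real) \<Rightarrow> ('a \<Rightarrow> 'b \<Rightarrow> real) \<Rightarrow> real" where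
  "eta_KL S T P W = Sup {kl_div T (chan_out S W R) (chan_out S W P) / kl_div S R P | R.
      is_pmf S R \<and> abs_cont S R P \<and> 0 < kl_div S R P}"

definition eta_chi2 :: "'a set \<Rightarrow> 'b set \<Rightarrow> ('a \<Rightarrow> real) \<Rightarrow> ('a \<Rightarrow> 'b \<Rightarrow> real) \<Rightarrow> real" where
  "eta_chi2 S T P W = Sup {chi2_div T (chan_out S W R) (chan_out S W P) / chi2_div S R P | R.
      is_pmf S R \<and> abs_cont S R P \<and> 0 < chi2_div S R P}"

definition margX :: "('x \<Rightarrow> 'y::finite \<Rightarrow> real) \<Rightarrow> 'x \<Rightarrow> real" where
  "margX PXY x = (\<Sum>y\<in>UNIV. PXY x y)"

definition margY :: "('x::finite \<Rightarrow> 'y \<Rightarrow> real) \<Rightarrow> 'y \<Rightarrow> real" where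
  "margY PXY y = (\<Sum>x\<in>UNIV. PXY x y)"

text \<open>Sequences of length n: X_1^n is represented by a list of length n.\<close>
definition seqs :: "nat \<Rightarrow> 'a list set" where
  "seqs n = {xs. length xs = n}"

definition iid_input :: "('x \<Rightarrow> 'y::finite \<Rightarrow> real) \<Rightarrow> 'x list \<Rightarrow> real" where
  "iid_input PXY xs = (\<Prod>i<length xs. margX PXY (xs ! i))"

definition iid_channel :: "('x \<Rightarrow> 'y::finite \<Rightarrow> real) \<Rightarrow> 'x list \<Rightarrow> 'y list \<Rightarrow> real" where
  "iid_channel PXY xs ys = (\<Prod>i<length xs. PXY (xs ! i) (ys ! i) / margX PXY (xs ! i))"

definition pi_set :: "('x \<Rightarrow> real) \<Rightarrow> 'x set \<Rightarrow> real" where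
  "pi_set PX A = min (sum PX A) (1 - sum PX A)"

definition phi :: "real \<Rightarrow> real" where
  "phi p = (if p = 1/2 then 2 else (1 / (1 - 2*p)) * ln ((1 - p) / p))"

end

theory Submission
  imports Defs "HOL-Analysis.Analysis" "HOL-Real_Asymp.Real_Asymp"
begin

definition ent :: "real \<Rightarrow> real \<Rightarrow> real" where
  "ent x y = (if x = 0 then 0 else x * ln (x / y))"

lemma Gx_convex: "convex_on {0..<1} (\<lambda>x::real. ln (1+x) - ln (1-x))"
proof (rule f''_ge0_imp_convex[where f'="\<lambda>x. 1/(1+x) + 1/(1-x)" and f''="\<lambda>x. -1/(1+x)^2 + 1/(1-x)^2"])
  show "convex {0..<1::real}" by simp
  fix x :: real assume x: "x \<in> {0..<1}"
  show "((\<lambda>x. ln (1+x) - ln (1-x)) has_real_derivative 1/(1+x) + 1/(1-x)) (at x)"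
    using x by (auto intro!: derivative_eq_intros simp: field_simps)
  show "((\<lambda>x. 1/(1+x) + 1/(1-x)) has_real_derivative -1/(1+x)^2 + 1/(1-x)^2) (at x)"
    using x by (auto intro!: derivative_eq_intros simp: field_simps power2_eq_square)
  have "(1-x)^2 \<le> (1+x)^2" using x by (simp add: power2_eq_square algebra_simps)
  moreover have "0 < (1-x)^2" using x by simp
  ultimately have "1/(1+x)^2 \<le> 1/(1-x)^2" by (simp add: frac_le)
  then show "0 \<le> -1/(1+x)^2 + 1/(1-x)^2" by simp
qed

lemma Gx_ge: fixes x :: real assumes "0 \<le> x" "x < 1" shows "2*x \<le> ln (1+x) - ln (1-x)"
proof -
  have "(\<lambda>t. ln (1+t) - ln (1-t) - 2*t) 0 \<le> (\<lambda>t. ln (1+t) - ln (1-t) - 2*t) x"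
  proof (rule deriv_nonneg_imp_mono[where g'="\<lambda>t. 1/(1+t) + 1/(1-t) - 2" and g="\<lambda>t. ln (1+t) - ln (1-t) - 2*t" and a=0 and b=x])
    fix t assume t: "t \<in> {0..x}"
    show "((\<lambda>t. ln (1+t) - ln (1-t) - 2*t) has_real_derivative 1/(1+t) + 1/(1-t) - 2) (at t)"
      using t assms by (auto intro!: derivative_eq_intros simp: divide_simps)
    have "t*t \<le> t*1" using t assms by (intro mult_left_mono) auto
    then have t1: "t*t < 1" using t assms by simp
    have nz: "1+t \<noteq> 0" "1-t \<noteq> 0" "1 - t^2 \<noteq> 0" using t assms t1 by (auto simp: power2_eq_square)
    have "1 - t^2 = (1+t)*(1-t)" by (simp add: power2_eq_square algebra_simps)
    then have "1/(1+t) + 1/(1-t) = 2/(1-t^2)" using nz by (simp add: field_simps)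
    moreover have "2/(1-t^2) \<ge> 2"
    proof -
      have h: "0 < 1 - t^2" "1 - t^2 \<le> 1" using t assms t1 by (auto simp: power2_eq_square)
      then show ?thesis by (simp add: le_divide_eq)
    qed
    ultimately show "0 \<le> 1/(1+t) + 1/(1-t) - 2" by simp
  qed (use assms in auto)
  then show ?thesis by simp
qed

lemma phi_alt: assumes "0 < b" "b < 1/2"
  shows "phi b = (ln (1 + (1-2*b)) - ln (1 - (1-2*b))) / (1-2*b)"
proof -
  have "ln ((1-b)/b) = ln (1-b) - ln b" using assms by (simp add: ln_div)
  also have "\<dots> = ln (2*(1-b)) - ln (2*b)" using assms ln_mult[of 2 "1-b"] ln_mult[of 2 b] by simp
  also have "\<dots> = ln (1 + (1-2*b)) - ln (1 - (1-2*b))" by (simp add: algebra_simps)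
  finally show ?thesis using assms unfolding phi_def by simp
qed

lemma phi_mono: assumes "0 < a" "a \<le> b" "b \<le> 1/2" shows "phi b \<le> phi a"
proof (cases "b = 1/2")
  case True
  show ?thesis
  proof (cases "a = 1/2")
    case True then have "a = b" using \<open>b=1/2\<close> by simp
    then show ?thesis by simp
  next
    case False
    then have a2: "a < 1/2" using assms by simp
    have "2*(1-2*a) \<le> ln (1 + (1-2*a)) - ln (1 - (1-2*a))" using Gx_ge[of "1-2*a"] assms by simp
    then have "2 \<le> (ln (1 + (1-2*a)) - ln (1 - (1-2*a))) / (1-2*a)" using a2 by (simp add: field_simps)
    then show ?thesis using phi_alt[of a] a2 assms True unfolding phi_def[of b] by simp
  qed
next
  case False
  then have b2: "b < 1/2" using assms by simp
  define x where "x = 1 - 2*a"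
  define y where "y = 1 - 2*b"
  have xy: "0 < y" "y \<le> x" "x < 1" using assms b2 by (auto simp: x_def y_def)
  let ?G = "\<lambda>x::real. ln (1+x) - ln (1-x)"
  have "?G ((1 - y/x) *\<^sub>R 0 + (y/x) *\<^sub>R x) \<le> (1 - y/x) * ?G 0 + (y/x) * ?G x"
    by (rule convex_onD[OF Gx_convex]) (use xy in \<open>auto simp: field_simps\<close>)
  then have "?G y \<le> (y/x) * ?G x" using xy by simp
  then have "?G y / y \<le> ?G x / x" using xy by (simp add: field_simps)
  then show ?thesis using phi_alt[of a] phi_alt[of b] assms b2 unfolding x_def y_def by simp
qed

lemma phi_ge2: assumes "0 < a" "a \<le> 1/2" shows "2 \<le> phi a"
  using phi_mono[of a "1/2"] assms by (simp add: phi_def)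

lemma phi_sym: assumes "0 < p" "p < 1" shows "phi (1-p) = phi p"
proof (cases "p = 1/2")
  case True then have "1 - p = p" by simp
  then show ?thesis by metis
next
  case False
  have "ln (p / (1-p)) = - ln ((1-p)/p)" using assms by (simp add: ln_div)
  moreover have "1 - 2*(1-p) = -(1-2*p)" by simp
  ultimately show ?thesis using False unfolding phi_def by (auto simp: divide_simps algebra_simps)
qed

definition LL :: "real \<Rightarrow> real" where "LL q = ln q - ln (1-q)"

definition GG :: "real \<Rightarrow> real \<Rightarrow> real \<Rightarrow> real" where
  "GG p c q = q*(ln q - ln p) + (1-q)*(ln (1-q) - ln (1-p)) - c*(q-p)^2"

lemma GG_deriv: assumes "0 < q" "q < 1"
  shows "(GG p c has_real_derivative (LL q - LL p - 2*c*(q-p))) (at q)"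
proof -
  have "((\<lambda>q. q*(ln q - ln p) + (1-q)*(ln (1-q) - ln (1-p)) - c*(q-p)^2) has_real_derivative
     (1*(ln q - ln p) + q*(1/q) + ((-1)*(ln (1-q) - ln (1-p)) + (1-q)*(-1/(1-q))) - c*(2*(q-p)))) (at q)"
    using assms by (auto intro!: derivative_eq_intros)
  moreover have "1*(ln q - ln p) + q*(1/q) + ((-1)*(ln (1-q) - ln (1-p)) + (1-q)*(-1/(1-q))) - c*(2*(q-p))
     = LL q - LL p - 2*c*(q-p)" using assms by (simp add: LL_def field_simps)
  ultimately show ?thesis unfolding GG_def[abs_def] by simp
qed

lemma LL_sym: "0 < q \<Longrightarrow> q < 1 \<Longrightarrow> LL (1-q) = - LL q"
  by (simp add: LL_def)

lemma LL_concave: assumes "0 < a" "b \<le> 1/2" shows "concave_on {a..b} LL"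
proof (rule f''_le0_imp_concave[where f'="\<lambda>x. 1/x + 1/(1-x)" and f''="\<lambda>x. -1/x^2 + 1/(1-x)^2"])
  show "convex {a..b}" by simp
  fix x :: real assume x: "x \<in> {a..b}"
  then have x0: "0 < x" "x \<le> 1/2" using assms by auto
  show "(LL has_real_derivative 1/x + 1/(1-x)) (at x)"
    unfolding LL_def[abs_def] using x0 by (auto intro!: derivative_eq_intros simp: divide_simps)
  show "((\<lambda>x. 1/x + 1/(1-x)) has_real_derivative -1/x^2 + 1/(1-x)^2) (at x)"
    using x0 by (auto intro!: derivative_eq_intros simp: field_simps power2_eq_square)
  have "x^2 \<le> (1-x)^2" using x0 by (simp add: power2_eq_square algebra_simps)
  moreover have "0 < x^2" using x0 by simp
  ultimately have "1/(1-x)^2 \<le> 1/x^2" by (simp add: frac_le)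
  then show "-1/x^2 + 1/(1-x)^2 \<le> 0" by simp
qed

lemma LL_half: "LL (1/2) = 0" by (simp add: LL_def)

lemma phi_LL: assumes "0 < p" "p < 1/2" shows "2 * phi p = (LL (1/2) - LL p) / (1/2 - p)"
proof -
  have "ln ((1-p)/p) = ln (1-p) - ln p" using assms by (simp add: ln_div)
  then show ?thesis using assms unfolding phi_def LL_def by (simp add: field_simps)
qed

lemma Dsign1: assumes "0 < p" "p < 1/2" "p \<le> q" "q \<le> 1/2"
  shows "0 \<le> LL q - LL p - 2*phi p*(q-p)"
proof -
  have "(LL (1/2) - LL p) / (1/2 - p) * (q - p) + LL p \<le> LL q"
    using concave_onD_Icc'[OF LL_concave[of p "1/2"], of q] assms by simp
  then show ?thesis using phi_LL[OF assms(1,2)] by (simp add: algebra_simps)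
qed

lemma Dsign2: assumes "0 < p" "p < 1/2" "0 < q" "q \<le> p"
  shows "LL q - LL p - 2*phi p*(q-p) \<le> 0"
proof (cases "q = p")
  case True then show ?thesis by simp
next
  case False
  then have qp: "q < p" using assms by simp
  have "(LL (1/2) - LL q) / (1/2 - q) * (p - q) + LL q \<le> LL p"
    using concave_onD_Icc'[OF LL_concave[of q "1/2"], of p] assms by simp
  then have "- LL q * (p - q) + LL q * (1/2 - q) \<le> LL p * (1/2 - q)"
    using assms qp by (simp add: LL_half field_simps)
  then have h: "LL q * (1/2 - p) \<le> LL p * (1/2 - q)" by (simp add: algebra_simps)
  have ph: "2*phi p = - LL p / (1/2 - p)" using phi_LL[OF assms(1,2)] by (simp add: LL_half)
  have "LL p + 2*phi p*(q-p) = LL p + (- LL p / (1/2 - p))*(q-p)" by (simp add: ph)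
  also have "\<dots> = LL p * (1/2 - q) / (1/2 - p)" using assms by (simp add: field_simps)
  finally have "LL p + 2*phi p*(q-p) = LL p * (1/2 - q) / (1/2 - p)" .
  moreover have "LL q \<le> LL p * (1/2 - q) / (1/2 - p)" using h assms by (simp add: field_simps)
  ultimately show ?thesis by simp
qed

lemma GG_zero: "GG p c p = 0" by (simp add: GG_def)

lemma GG_zero2: assumes "0 < p" "p < 1/2" shows "GG p (phi p) (1-p) = 0"
proof -
  have e: "ln ((1-p)/p) = ln (1-p) - ln p" using assms by (simp add: ln_div)
  have "GG p (phi p) (1-p) = (1-p)*(ln (1-p) - ln p) + p*(ln p - ln (1-p)) - (1/(1-2*p)*(ln (1-p) - ln p))*(1-2*p)^2"
    using assms unfolding GG_def phi_def e by simp
  also have "\<dots> = 0" using assms by (simp add: field_simps power2_eq_square)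
  finally show ?thesis .
qed

lemma D_antisym: assumes "0 < p" "p < 1/2" "0 < x" "x < 1"
  shows "LL x - LL p - 2*phi p*(x-p) = - (LL (1-x) - LL p - 2*phi p*((1-x)-p))"
proof -
  have "2 * phi p * (1/2 - p) = - LL p" using phi_LL[OF assms(1,2)] assms by (simp add: LL_half field_simps)
  then show ?thesis using LL_sym[of x] assms by (simp add: algebra_simps)
qed

lemma GG_nonneg_lt: assumes "0 < p" "p < 1/2" "0 < q" "q < 1"
  shows "0 \<le> GG p (phi p) q"
proof -
  let ?D = "\<lambda>x. LL x - LL p - 2*phi p*(x-p)"
  have der: "\<And>x. 0 < x \<Longrightarrow> x < 1 \<Longrightarrow> (GG p (phi p) has_real_derivative ?D x) (at x)"
    by (rule GG_deriv)
  consider "q \<le> p" | "p \<le> q" "q \<le> 1/2" | "1/2 \<le> q" "q \<le> 1-p" | "1-p \<le> q" by linarith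
  then show ?thesis
  proof cases
    case 1
    have "GG p (phi p) p \<le> GG p (phi p) q"
    proof (rule deriv_nonpos_imp_antimono[where g'="?D" and g="GG p (phi p)"])
      fix x assume x: "x \<in> {q..p}"
      then show "(GG p (phi p) has_real_derivative ?D x) (at x)" using 1 assms by (intro der) auto
      show "?D x \<le> 0" using x 1 assms by (intro Dsign2) auto
    qed (use 1 in auto)
    then show ?thesis by (simp add: GG_zero)
  next
    case 2
    have "GG p (phi p) p \<le> GG p (phi p) q"
    proof (rule deriv_nonneg_imp_mono[where g'="?D" and g="GG p (phi p)"])
      fix x assume x: "x \<in> {p..q}"
      then show "(GG p (phi p) has_real_derivative ?D x) (at x)" using 2 assms by (intro der) auto
      show "0 \<le> ?D x" using x 2 assms by (intro Dsign1) auto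
    qed (use 2 in auto)
    then show ?thesis by (simp add: GG_zero)
  next
    case 3
    have "GG p (phi p) (1-p) \<le> GG p (phi p) q"
    proof (rule deriv_nonpos_imp_antimono[where g'="?D" and g="GG p (phi p)"])
      fix x assume x: "x \<in> {q..1-p}"
      then show "(GG p (phi p) has_real_derivative ?D x) (at x)" using 3 assms by (intro der) auto
      have "0 \<le> ?D (1-x)" using x 3 assms by (intro Dsign1) auto
      then show "?D x \<le> 0" using D_antisym[of p x] x 3 assms by simp
    qed (use 3 in auto)
    then show ?thesis using GG_zero2 assms by simp
  next
    case 4
    have "GG p (phi p) (1-p) \<le> GG p (phi p) q"
    proof (rule deriv_nonneg_imp_mono[where g'="?D" and g="GG p (phi p)"])
      fix x assume x: "x \<in> {1-p..q}"
      then show "(GG p (phi p) has_real_derivative ?D x) (at x)" using 4 assms by (intro der) auto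
      have "?D (1-x) \<le> 0" using x 4 assms by (intro Dsign2) auto
      then show "0 \<le> ?D x" using D_antisym[of p x] x 4 assms by simp
    qed (use 4 in auto)
    then show ?thesis using GG_zero2 assms by simp
  qed
qed

lemma GG_nonneg_half: assumes "0 < q" "q < 1"
  shows "0 \<le> GG (1/2) 2 q"
proof -
  let ?D = "\<lambda>x. LL x - LL (1/2) - 2*2*(x-1/2)"
  have der: "\<And>x. 0 < x \<Longrightarrow> x < 1 \<Longrightarrow> (GG (1/2) 2 has_real_derivative ?D x) (at x)"
    by (rule GG_deriv)
  have Dmono: "?D a \<le> ?D b" if "0 < a" "a \<le> b" "b < 1" for a b
  proof (rule deriv_nonneg_imp_mono[where g'="\<lambda>x. 1/x + 1/(1-x) - 4" and g="?D" and a=a and b=b])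
    fix x assume x: "x \<in> {a..b}"
    then have x0: "0 < x" "x < 1" using that by auto
    show "(?D has_real_derivative 1/x + 1/(1-x) - 4) (at x)"
      unfolding LL_def using x0 by (auto intro!: derivative_eq_intros simp: divide_simps)
    have "0 \<le> (x - 1/2)^2" by simp
    then have "x*(1-x) \<le> 1/4" by (simp add: power2_eq_square algebra_simps)
    moreover have "0 < x*(1-x)" using x0 by simp
    moreover have "1/x + 1/(1-x) = 1/(x*(1-x))" using x0 by (simp add: field_simps)
    ultimately show "0 \<le> 1/x + 1/(1-x) - 4" by (simp add: field_simps)
  qed (use that in auto)
  consider "q \<le> 1/2" | "1/2 \<le> q" by linarith
  then show ?thesis
  proof cases
    case 1
    have "GG (1/2) 2 (1/2) \<le> GG (1/2) 2 q"
    proof (rule deriv_nonpos_imp_antimono[where g'="?D" and g="GG (1/2) 2"])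
      fix x assume x: "x \<in> {q..1/2}"
      then show "(GG (1/2) 2 has_real_derivative ?D x) (at x)" using assms by (intro der) auto
      show "?D x \<le> 0" using Dmono[of x "1/2"] x assms by simp
    qed (use 1 in auto)
    then show ?thesis by (simp add: GG_zero)
  next
    case 2
    have "GG (1/2) 2 (1/2) \<le> GG (1/2) 2 q"
    proof (rule deriv_nonneg_imp_mono[where g'="?D" and g="GG (1/2) 2"])
      fix x assume x: "x \<in> {1/2..q}"
      then show "(GG (1/2) 2 has_real_derivative ?D x) (at x)" using assms by (intro der) auto
      show "0 \<le> ?D x" using Dmono[of "1/2" x] x assms by simp
    qed (use 2 in auto)
    then show ?thesis by (simp add: GG_zero)
  qed
qed

lemma GG_nonneg: assumes "0 < p" "p \<le> 1/2" "0 < q" "q < 1"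
  shows "0 \<le> GG p (phi p) q"
proof (cases "p = 1/2")
  case True then have p2: "p = 1/2" by simp
  have "phi (1/2) = 2" by (simp add: phi_def)
  then show ?thesis using GG_nonneg_half[OF assms(3,4)] unfolding p2 by simp
next
  case False then show ?thesis using GG_nonneg_lt assms by simp
qed

lemma binary_ineq: assumes "0 < p" "p \<le> 1/2" "0 \<le> q" "q \<le> 1"
  shows "phi p * (q-p)^2 \<le> ent q p + ent (1-q) (1-p)"
proof -
  let ?c = "phi p"
  have p1: "p < 1" using assms by simp
  have ev0: "\<forall>\<^sub>F q in at_right 0. 0 \<le> GG p ?c q"
  proof -
    have "eventually (\<lambda>x. x \<in> {0<..<1::real}) (at_right 0)" by (rule eventually_at_right_real) simp
    then show ?thesis by eventually_elim (use GG_nonneg assms in auto)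
  qed
  have ev1: "\<forall>\<^sub>F q in at_left 1. 0 \<le> GG p ?c q"
  proof -
    have "eventually (\<lambda>x. x \<in> {0<..<1::real}) (at_left 1)" by (rule eventually_at_left_real) simp
    then show ?thesis by eventually_elim (use GG_nonneg assms in auto)
  qed
  consider "q = 0" | "q = 1" | "0 < q" "q < 1" using assms by linarith
  then show ?thesis
  proof cases
    case 1
    have h1: "((\<lambda>q::real. q * ln q) \<longlongrightarrow> 0) (at_right 0)" by real_asymp
    have h2: "((\<lambda>q. - q * ln p + (1-q)*(ln (1-q) - ln (1-p)) - ?c*(q-p)^2) \<longlongrightarrow>
         - 0 * ln p + (1-0)*(ln (1-0) - ln (1-p)) - ?c*(0-p)^2) (at_right 0)"
      by (intro tendsto_intros) auto
    have "((\<lambda>q. q * ln q + (- q * ln p + (1-q)*(ln (1-q) - ln (1-p)) - ?c*(q-p)^2)) \<longlongrightarrow>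
         0 + (- 0 * ln p + (1-0)*(ln (1-0) - ln (1-p)) - ?c*(0-p)^2)) (at_right 0)"
      by (rule tendsto_add[OF h1 h2])
    then have "(GG p ?c \<longlongrightarrow> - ln (1-p) - ?c*p^2) (at_right 0)"
      unfolding GG_def by (simp add: algebra_simps)
    then have "0 \<le> - ln (1-p) - ?c*p^2"
      by (rule tendsto_lowerbound[OF _ ev0]) simp
    moreover have "ent q p + ent (1-q) (1-p) = - ln (1-p)" using 1 p1 by (simp add: ent_def ln_div)
    ultimately show ?thesis using 1 by simp
  next
    case 2
    have h1: "((\<lambda>q::real. (1-q) * ln (1-q)) \<longlongrightarrow> 0) (at_left 1)" by real_asymp
    have h2: "((\<lambda>q. q*(ln q - ln p) - (1-q) * ln (1-p) - ?c*(q-p)^2) \<longlongrightarrow>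
         1*(ln 1 - ln p) - (1-1) * ln (1-p) - ?c*(1-p)^2) (at_left 1)"
      by (intro tendsto_intros) auto
    have "((\<lambda>q. (1-q) * ln (1-q) + (q*(ln q - ln p) - (1-q) * ln (1-p) - ?c*(q-p)^2)) \<longlongrightarrow>
         0 + (1*(ln 1 - ln p) - (1-1) * ln (1-p) - ?c*(1-p)^2)) (at_left 1)"
      by (rule tendsto_add[OF h1 h2])
    then have "(GG p ?c \<longlongrightarrow> - ln p - ?c*(1-p)^2) (at_left 1)"
      unfolding GG_def by (simp add: algebra_simps)
    then have "0 \<le> - ln p - ?c*(1-p)^2"
      by (rule tendsto_lowerbound[OF _ ev1]) simp
    moreover have "ent q p + ent (1-q) (1-p) = - ln p" using 2 assms by (simp add: ent_def ln_div)
    moreover have "(q-p)^2 = (1-p)^2" using 2 by simp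
    ultimately show ?thesis by simp
  next
    case 3
    have "ent q p + ent (1-q) (1-p) - ?c * (q-p)^2 = GG p ?c q"
      using 3 assms by (simp add: ent_def GG_def ln_div)
    then show ?thesis using GG_nonneg[OF assms(1,2) 3] by simp
  qed
qed

lemma ent_term: assumes "0 < X" "0 < Y" "0 \<le> x" "0 \<le> y" "y = 0 \<longrightarrow> x = 0"
  shows "x * ln (X/Y) + x - y * X / Y \<le> ent x y"
proof (cases "x = 0")
  case True then show ?thesis using assms by (simp add: ent_def)
next
  case False
  then have x0: "0 < x" and y0: "0 < y" using assms by auto
  define z where "z = (x*Y)/(y*X)"
  have z0: "0 < z" using x0 y0 assms by (simp add: z_def)
  have "ln (1/z) \<le> 1/z - 1" using z0 by (intro ln_le_minus_one) simp
  then have "1 - 1/z \<le> ln z" using z0 by (simp add: ln_div)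
  moreover have "ln z = ln (x/y) - ln (X/Y)" using x0 y0 assms unfolding z_def
    by (simp add: ln_div ln_mult)
  moreover have "1/z = (y*X)/(x*Y)" by (simp add: z_def)
  ultimately have "1 - (y*X)/(x*Y) \<le> ln (x/y) - ln (X/Y)" by simp
  then have "x * (1 - (y*X)/(x*Y)) \<le> x * (ln (x/y) - ln (X/Y))" using x0 by (simp add: mult_left_mono)
  moreover have "x * (1 - (y*X)/(x*Y)) = x - y*X/Y" using x0 assms by (simp add: field_simps)
  ultimately show ?thesis using False by (simp add: ent_def algebra_simps)
qed

lemma logsum:
  assumes "finite I" "\<And>i. i \<in> I \<Longrightarrow> 0 \<le> x i" "\<And>i. i \<in> I \<Longrightarrow> 0 \<le> y i"
    "\<And>i. i \<in> I \<Longrightarrow> y i = 0 \<Longrightarrow> x i = 0"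
  shows "ent (sum x I) (sum y I) \<le> (\<Sum>i\<in>I. ent (x i) (y i))"
proof (cases "sum x I = 0")
  case True
  then have "\<forall>i\<in>I. x i = 0" using sum_nonneg_eq_0_iff[OF assms(1) assms(2)] True by simp
  then show ?thesis using True by (simp add: ent_def)
next
  case False
  have "0 \<le> sum x I" using assms(2) by (rule sum_nonneg)
  then have X: "0 < sum x I" using False by simp
  obtain i where i: "i \<in> I" "x i \<noteq> 0" using False by (rule sum.not_neutral_contains_not_neutral)
  then have "0 < y i" using assms(3)[OF i(1)] assms(4)[OF i(1)] by force
  moreover have "y i \<le> sum y I" using i(1) assms(1,3) by (intro member_le_sum) auto
  ultimately have Y: "0 < sum y I" by simp
  have "(\<Sum>i\<in>I. x i * ln (sum x I / sum y I) + x i - y i * sum x I / sum y I) \<le> (\<Sum>i\<in>I. ent (x i) (y i))"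
  proof (rule sum_mono)
    fix j assume j: "j \<in> I"
    show "x j * ln (sum x I / sum y I) + x j - y j * sum x I / sum y I \<le> ent (x j) (y j)"
      by (rule ent_term[OF X Y assms(2)[OF j] assms(3)[OF j]]) (use assms(4)[OF j] in simp)
  qed
  moreover have "(\<Sum>i\<in>I. x i * ln (sum x I / sum y I) + x i - y i * sum x I / sum y I)
     = sum x I * ln (sum x I / sum y I) + sum x I - sum y I * sum x I / sum y I"
    by (simp add: sum.distrib sum_subtractf sum_distrib_right[symmetric] sum_divide_distrib[symmetric])
  moreover have "sum y I * sum x I / sum y I = sum x I" using Y by simp
  ultimately show ?thesis using False by (simp add: ent_def)
qed

lemma logsum_pos:
  assumes "finite I" "\<And>i. i \<in> I \<Longrightarrow> 0 \<le> x i" "\<And>i. i \<in> I \<Longrightarrow> 0 < y i"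
  shows "ent (sum x I) (sum y I) \<le> (\<Sum>i\<in>I. ent (x i) (y i))"
proof (rule logsum)
  fix i assume i: "i \<in> I"
  show "0 \<le> x i" using assms(2)[OF i] .
  show "0 \<le> y i" using assms(3)[OF i] by simp
  show "y i = 0 \<Longrightarrow> x i = 0" using assms(3)[OF i] by simp
qed (rule assms(1))

lemma kl_ent: "kl_div S R P = (\<Sum>u\<in>S. ent (R u) (P u))"
  by (simp add: kl_div_def ent_def)

lemma kl_nonneg:
  assumes "finite S" "\<And>u. u \<in> S \<Longrightarrow> 0 < P u" "sum P S = 1" "\<And>u. u \<in> S \<Longrightarrow> 0 \<le> R u" "sum R S = 1"
  shows "0 \<le> kl_div S R P"
proof -
  have "ent (sum R S) (sum P S) \<le> (\<Sum>u\<in>S. ent (R u) (P u))"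
    by (rule logsum_pos) (use assms in auto)
  then show ?thesis using assms by (simp add: kl_ent ent_def)
qed

lemma sum_sq_le: fixes f :: "'a \<Rightarrow> real" assumes "finite A" "\<And>i. i \<in> A \<Longrightarrow> 0 \<le> f i"
  shows "(\<Sum>i\<in>A. (f i)^2) \<le> (sum f A)^2"
proof -
  have "(\<Sum>i\<in>A. (f i)^2) \<le> (\<Sum>i\<in>A. f i * sum f A)"
  proof (rule sum_mono)
    fix i assume i: "i \<in> A"
    have "f i \<le> sum f A" using assms i by (intro member_le_sum) auto
    then show "(f i)^2 \<le> f i * sum f A" using assms i by (simp add: power2_eq_square mult_left_mono)
  qed
  also have "\<dots> = (sum f A)^2" by (simp add: sum_distrib_right[symmetric] power2_eq_square)
  finally show ?thesis .
qed

lemma OW_final: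
  assumes S: "finite S" and P0: "\<And>u. u \<in> S \<Longrightarrow> 0 < P u" and P1: "sum P S = 1"
    and R0: "\<And>u. u \<in> S \<Longrightarrow> 0 \<le> R u" and R1: "sum R S = 1"
    and pis: "\<And>A. A \<subseteq> S \<Longrightarrow> min (sum P A) (1 - sum P A) \<le> ps" and ps: "ps \<le> 1/2"
  shows "phi ps * (\<Sum>u\<in>S. (R u - P u)^2) \<le> 2 * kl_div S R P"
proof -
  define A where "A = {u\<in>S. P u < R u}"
  define p where "p = sum P A"
  define q where "q = sum R A"
  have AS: "A \<subseteq> S" "finite A" "finite (S - A)" using S by (auto simp: A_def)
  have klnn: "0 \<le> kl_div S R P" by (rule kl_nonneg) (use assms in auto)
  show ?thesis
  proof (cases "A = {}")
    case True
    then have "\<forall>u\<in>S. R u \<le> P u" by (auto simp: A_def)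
    moreover have "sum (\<lambda>u. P u - R u) S = 0" using R1 P1 by (simp add: sum_subtractf)
    ultimately have "\<forall>u\<in>S. P u - R u = 0" using sum_nonneg_eq_0_iff[OF S, of "\<lambda>u. P u - R u"] by simp
    then have "\<forall>u\<in>S. R u = P u" by simp
    then have "(\<Sum>u\<in>S. (R u - P u)^2) = 0" by simp
    then show ?thesis using klnn by simp
  next
    case False
    then obtain a where a: "a \<in> A" by blast
    have p0: "0 < p"
    proof -
      have "P a \<le> sum P A" using a AS P0 by (intro member_le_sum) (auto simp: less_imp_le)
      moreover have "0 < P a" using a AS P0 by auto
      ultimately show ?thesis by (simp add: p_def)
    qed
    have nonempty: "S - A \<noteq> {}"
    proof
      assume e: "S - A = {}"
      then have "\<forall>u\<in>S. P u < R u" by (auto simp: A_def)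
      then have "sum P S < sum R S" using S a AS by (intro sum_strict_mono) auto
      then show False using P1 R1 by simp
    qed
    have spl: "\<And>f. sum f S = sum f A + sum f (S - A)" using AS S by (metis add.commute sum.subset_diff)
    have Pc: "sum P (S - A) = 1 - p" using spl[of P] P1 p_def by simp
    have Rc: "sum R (S - A) = 1 - q" using spl[of R] R1 q_def by simp
    have p1: "p < 1"
    proof -
      obtain b where "b \<in> S - A" using nonempty by blast
      then have "P b \<le> sum P (S - A)" "0 < P b" using AS P0 by (auto intro!: member_le_sum simp: less_imp_le)
      then have "0 < sum P (S - A)" by simp
      then show ?thesis using Pc by simp
    qed
    have qp: "p \<le> q" unfolding p_def q_def by (rule sum_mono) (auto simp: A_def)
    have q1: "q \<le> 1" "0 \<le> q" using Rc R1 AS R0 sum_nonneg[of "S-A" R] sum_nonneg[of A R] by (auto simp: q_def)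
    have AinS: "\<And>u. u \<in> A \<Longrightarrow> u \<in> S" "\<And>u. u \<in> S - A \<Longrightarrow> u \<in> S" using AS(1) by auto
    have b1: "ent q p \<le> (\<Sum>u\<in>A. ent (R u) (P u))" unfolding p_def q_def
      by (rule logsum_pos[OF AS(2)]) (simp_all add: R0 P0 AinS)
    have b2: "ent (1-q) (1-p) \<le> (\<Sum>u\<in>S-A. ent (R u) (P u))" unfolding Pc[symmetric] Rc[symmetric]
      by (rule logsum_pos[OF AS(3)]) (simp_all add: R0 P0 AinS)
    have kb: "ent q p + ent (1-q) (1-p) \<le> kl_div S R P" using b1 b2 spl[of "\<lambda>u. ent (R u) (P u)"]
      unfolding kl_ent by linarith
    have s1: "(\<Sum>u\<in>A. (R u - P u)^2) \<le> (q - p)^2"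
    proof -
      have "(\<Sum>u\<in>A. (R u - P u)^2) \<le> (\<Sum>u\<in>A. R u - P u)^2" by (rule sum_sq_le[OF AS(2)]) (auto simp: A_def)
      then show ?thesis by (simp add: p_def q_def sum_subtractf)
    qed
    have s2: "(\<Sum>u\<in>S-A. (R u - P u)^2) \<le> (q - p)^2"
    proof -
      have "(\<Sum>u\<in>S-A. (P u - R u)^2) \<le> (\<Sum>u\<in>S-A. P u - R u)^2" by (rule sum_sq_le[OF AS(3)]) (auto simp: A_def)
      moreover have "(\<Sum>u\<in>S-A. P u - R u) = q - p" using Pc Rc by (simp add: sum_subtractf)
      moreover have "(\<Sum>u\<in>S-A. (P u - R u)^2) = (\<Sum>u\<in>S-A. (R u - P u)^2)" by (simp add: power2_commute)
      ultimately show ?thesis by simp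
    qed
    have sq: "(\<Sum>u\<in>S. (R u - P u)^2) \<le> 2 * (q-p)^2" using s1 s2 spl[of "\<lambda>u. (R u - P u)^2"] by simp
    define m where "m = min p (1-p)"
    have m0: "0 < m" "m \<le> 1/2" using p0 p1 by (auto simp: m_def min_def)
    have bin: "phi m * (q-p)^2 \<le> ent q p + ent (1-q) (1-p)"
    proof (cases "p \<le> 1/2")
      case True
      then have "m = p" by (simp add: m_def)
      then show ?thesis using binary_ineq[of p q] True p0 q1 by simp
    next
      case False
      then have "m = 1 - p" by (simp add: m_def)
      moreover have "phi (1-p) * ((1-q)-(1-p))^2 \<le> ent (1-q) (1-p) + ent (1-(1-q)) (1-(1-p))"
        using binary_ineq[of "1-p" "1-q"] False p1 q1 by simp
      ultimately show ?thesis by (simp add: power2_commute add.commute)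
    qed
    have mps: "m \<le> ps" using pis[OF AS(1)] by (simp add: m_def p_def)
    have "phi ps \<le> phi m" using phi_mono[of m ps] m0 mps ps by simp
    have ph2: "2 \<le> phi ps" using phi_ge2[of ps] m0 mps ps by simp
    have "phi ps * (q-p)^2 \<le> phi m * (q-p)^2" using \<open>phi ps \<le> phi m\<close> by (simp add: mult_right_mono)
    then have "phi ps * (q-p)^2 \<le> kl_div S R P" using bin kb by simp
    moreover have "phi ps * (\<Sum>u\<in>S. (R u - P u)^2) \<le> phi ps * (2 * (q-p)^2)"
      using sq ph2 by (simp add: mult_left_mono)
    ultimately show ?thesis by simp
  qed
qed

lemma sq_id: fixes p b w d a :: real shows "p \<noteq> 0 \<Longrightarrow> b \<noteq> 0 \<Longrightarrow> w*p*(d/p - a/b)^2 = w*(d^2/p) - 2*(a/b)*(w*d) + (a/b)^2*(w*p)"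
  by (simp add: field_simps power2_eq_square)

lemma ent_homog: "0 \<le> t \<Longrightarrow> ent (t*x) (t*y) = t * ent x y"
  by (cases "t = 0") (auto simp: ent_def)

locale chan =
  fixes S :: "'a set" and T :: "'b set" and W :: "'a \<Rightarrow> 'b \<Rightarrow> real" and P :: "'a \<Rightarrow> real"
  assumes finS: "finite S" and finT: "finite T"
    and W0: "\<And>u v. u \<in> S \<Longrightarrow> v \<in> T \<Longrightarrow> 0 \<le> W u v"
    and W1: "\<And>u. u \<in> S \<Longrightarrow> sum (W u) T = 1"
    and P0: "\<And>u. u \<in> S \<Longrightarrow> 0 < P u" and P1: "sum P S = 1"
    and WP0: "\<And>v. v \<in> T \<Longrightarrow> 0 < chan_out S W P v"
begin

lemma chan_out_sum: "sum (chan_out S W R) T = sum R S"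
proof -
  have "sum (chan_out S W R) T = (\<Sum>u\<in>S. \<Sum>v\<in>T. W u v * R u)"
    unfolding chan_out_def by (rule sum.swap)
  also have "\<dots> = (\<Sum>u\<in>S. R u)" by (simp add: sum_distrib_right[symmetric] W1)
  finally show ?thesis .
qed

lemma chan_out_nonneg: "(\<And>u. u \<in> S \<Longrightarrow> 0 \<le> R u) \<Longrightarrow> v \<in> T \<Longrightarrow> 0 \<le> chan_out S W R v"
  unfolding chan_out_def by (intro sum_nonneg mult_nonneg_nonneg W0) auto

lemma kl_dp: assumes R0: "\<And>u. u \<in> S \<Longrightarrow> 0 \<le> R u"
  shows "kl_div T (chan_out S W R) (chan_out S W P) \<le> kl_div S R P"
proof -
  have "kl_div T (chan_out S W R) (chan_out S W P) \<le> (\<Sum>v\<in>T. \<Sum>u\<in>S. W u v * ent (R u) (P u))"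
    unfolding kl_ent
  proof (rule sum_mono)
    fix v assume v: "v \<in> T"
    have "ent (chan_out S W R v) (chan_out S W P v) \<le> (\<Sum>u\<in>S. ent (W u v * R u) (W u v * P u))"
      unfolding chan_out_def
    proof (rule logsum)
      fix u assume u: "u \<in> S"
      show "0 \<le> W u v * R u" "0 \<le> W u v * P u" using W0[OF u v] R0[OF u] P0[OF u] by auto
      show "W u v * P u = 0 \<Longrightarrow> W u v * R u = 0" using P0[OF u] by simp
    qed (rule finS)
    also have "\<dots> = (\<Sum>u\<in>S. W u v * ent (R u) (P u))"
      by (intro sum.cong refl ent_homog W0 v) 
    finally show "ent (chan_out S W R v) (chan_out S W P v) \<le> (\<Sum>u\<in>S. W u v * ent (R u) (P u))" .
  qed
  also have "\<dots> = (\<Sum>u\<in>S. \<Sum>v\<in>T. W u v * ent (R u) (P u))" by (rule sum.swap)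
  also have "\<dots> = kl_div S R P" by (simp add: sum_distrib_right[symmetric] W1 kl_ent)
  finally show ?thesis .
qed

lemma chi2_dp:
  shows "chi2_div T (chan_out S W R) (chan_out S W P) \<le> chi2_div S R P"
proof -
  have "chi2_div T (chan_out S W R) (chan_out S W P) \<le> (\<Sum>v\<in>T. \<Sum>u\<in>S. W u v * ((R u - P u)^2 / P u))"
    unfolding chi2_div_def
  proof (rule sum_mono)
    fix v assume v: "v \<in> T"
    define b where "b = chan_out S W P v"
    define a where "a = (\<Sum>u\<in>S. W u v * (R u - P u))"
    have b0: "0 < b" using WP0[OF v] by (simp add: b_def)
    have ab: "chan_out S W R v - chan_out S W P v = a"
      unfolding a_def chan_out_def by (simp add: sum_subtractf algebra_simps)
    have "0 \<le> (\<Sum>u\<in>S. W u v * P u * ((R u - P u)/P u - a/b)^2)"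
      by (intro sum_nonneg mult_nonneg_nonneg W0 v) (auto dest: P0 simp: less_imp_le)
    also have "\<dots> = (\<Sum>u\<in>S. W u v * ((R u - P u)^2 / P u) - 2*(a/b) * (W u v * (R u - P u)) + (a/b)^2 * (W u v * P u))"
      by (intro sum.cong refl sq_id) (use b0 in \<open>auto dest!: P0\<close>)
    also have "\<dots> = (\<Sum>u\<in>S. W u v * ((R u - P u)^2 / P u)) - 2*(a/b)*a + (a/b)^2 * b"
      by (simp add: sum.distrib sum_subtractf sum_distrib_left a_def b_def chan_out_def)
    also have "\<dots> = (\<Sum>u\<in>S. W u v * ((R u - P u)^2 / P u)) - a^2/b"
      using b0 by (simp add: field_simps power2_eq_square)
    finally show "(chan_out S W R v - chan_out S W P v)^2 / chan_out S W P v \<le> (\<Sum>u\<in>S. W u v * ((R u - P u)^2 / P u))"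
      using ab by (simp add: b_def)
  qed
  also have "\<dots> = (\<Sum>u\<in>S. \<Sum>v\<in>T. W u v * ((R u - P u)^2 / P u))" by (rule sum.swap)
  also have "\<dots> = chi2_div S R P" unfolding chi2_div_def
  proof (rule sum.cong[OF refl])
    fix u assume u: "u \<in> S"
    show "(\<Sum>v\<in>T. W u v * ((R u - P u)^2 / P u)) = (R u - P u)^2 / P u"
      by (subst sum_distrib_right[symmetric]) (simp add: W1[OF u])
  qed
  finally show ?thesis .
qed

lemma chi2_nonneg_in: "0 \<le> chi2_div S R P"
  unfolding chi2_div_def by (intro sum_nonneg divide_nonneg_pos) (auto dest: P0)

lemma chi2_nonneg_out: "0 \<le> chi2_div T (chan_out S W R) (chan_out S W P)"
  unfolding chi2_div_def by (intro sum_nonneg divide_nonneg_pos) (auto dest: WP0)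

lemma KL_bdd: "bdd_above {kl_div T (chan_out S W R) (chan_out S W P) / kl_div S R P | R.
      is_pmf S R \<and> abs_cont S R P \<and> 0 < kl_div S R P}"
proof (rule bdd_aboveI[where M=1])
  fix x assume "x \<in> {kl_div T (chan_out S W R) (chan_out S W P) / kl_div S R P | R.
      is_pmf S R \<and> abs_cont S R P \<and> 0 < kl_div S R P}"
  then obtain R where R: "is_pmf S R" "0 < kl_div S R P"
    and x: "x = kl_div T (chan_out S W R) (chan_out S W P) / kl_div S R P" by blast
  have "kl_div T (chan_out S W R) (chan_out S W P) \<le> kl_div S R P"
    by (rule kl_dp) (use R in \<open>auto simp: is_pmf_def\<close>)
  then show "x \<le> 1" using R x by simp
qed

lemma chi2_bdd: "bdd_above {chi2_div T (chan_out S W R) (chan_out S W P) / chi2_div S R P | R.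
      is_pmf S R \<and> abs_cont S R P \<and> 0 < chi2_div S R P}"
proof (rule bdd_aboveI[where M=1])
  fix x assume "x \<in> {chi2_div T (chan_out S W R) (chan_out S W P) / chi2_div S R P | R.
      is_pmf S R \<and> abs_cont S R P \<and> 0 < chi2_div S R P}"
  then obtain R where R: "0 < chi2_div S R P"
    and x: "x = chi2_div T (chan_out S W R) (chan_out S W P) / chi2_div S R P" by blast
  then show "x \<le> 1" using chi2_dp[of R] by simp
qed

end

lemma glim: "((\<lambda>t. ((1 + t*c)*ln(1 + t*c) - t*c)/t^2) \<longlongrightarrow> c^2/2) (at_right (0::real))"
proof -
  consider "c > 0" | "c < 0" | "c = 0" by linarith
  then show ?thesis
  proof cases
    case 1
    have "((\<lambda>t. ((1 + t*c)*ln(1 + t*c) - t*c)/t^2) \<longlongrightarrow> c*c/2) (at_right (0::real))"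
      using 1 by real_asymp
    then show ?thesis by (simp add: power2_eq_square)
  next
    case 2
    have "((\<lambda>t. ((1 + t*c)*ln(1 + t*c) - t*c)/t^2) \<longlongrightarrow> c*c/2) (at_right (0::real))"
      using 2 by real_asymp
    then show ?thesis by (simp add: power2_eq_square)
  next
    case 3 then show ?thesis by simp
  qed
qed

lemma kl_lim:
  assumes fin: "finite S" and p0: "\<And>u. u \<in> S \<Longrightarrow> 0 < p u" and r0: "\<And>u. u \<in> S \<Longrightarrow> 0 \<le> r u"
    and sr: "sum r S = sum p S"
  shows "((\<lambda>t. (\<Sum>u\<in>S. ent (p u + t*(r u - p u)) (p u)) / t^2) \<longlongrightarrow> (\<Sum>u\<in>S. (r u - p u)^2 / p u) / 2) (at_right 0)"
proof -
  define c where "c u = (r u - p u) / p u" for u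
  have lim: "((\<lambda>t. \<Sum>u\<in>S. p u * (((1 + t*c u)*ln(1 + t*c u) - t*c u)/t^2)) \<longlongrightarrow> (\<Sum>u\<in>S. p u * ((c u)^2/2))) (at_right 0)"
    by (intro tendsto_sum tendsto_mult_left glim)
  have rhs: "(\<Sum>u\<in>S. p u * ((c u)^2/2)) = (\<Sum>u\<in>S. (r u - p u)^2 / p u) / 2"
    unfolding sum_divide_distrib
  proof (rule sum.cong[OF refl])
    fix u assume u: "u \<in> S"
    show "p u * ((c u)^2/2) = (r u - p u)^2 / p u / 2" using p0[OF u] by (simp add: c_def power2_eq_square field_simps)
  qed
  have ev: "\<forall>\<^sub>F t in at_right 0. (\<Sum>u\<in>S. p u * (((1 + t*c u)*ln(1 + t*c u) - t*c u)/t^2))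
      = (\<Sum>u\<in>S. ent (p u + t*(r u - p u)) (p u)) / t^2"
  proof -
    have "eventually (\<lambda>t. t \<in> {0<..<1::real}) (at_right 0)" by (rule eventually_at_right_real) simp
    then show ?thesis
    proof eventually_elim
      case (elim t)
      then have t: "0 < t" "t < 1" by auto
      have tm: "ent (p u + t*(r u - p u)) (p u) = p u * ((1 + t*c u)*ln(1 + t*c u) - t*c u) + t*(r u - p u)"
        if u: "u \<in> S" for u
      proof -
        have pu: "0 < p u" using p0[OF u] .
        have eq: "p u + t*(r u - p u) = p u * (1 + t * c u)" using pu by (simp add: c_def field_simps)
        have "0 \<le> t * r u" using t r0[OF u] by simp
        moreover have "0 < (1 - t) * p u" using t pu by simp
        ultimately have pos: "0 < p u + t*(r u - p u)" by (simp add: algebra_simps)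
        then have pos2: "0 < 1 + t * c u" using eq pu by (simp add: zero_less_mult_iff)
        have "ent (p u + t*(r u - p u)) (p u) = p u * (1 + t * c u) * ln (1 + t * c u)"
          using pos pu unfolding ent_def eq by simp
        also have "\<dots> = p u * ((1 + t*c u)*ln(1 + t*c u) - t*c u) + t*(r u - p u)"
          using pu by (simp add: c_def field_simps)
        finally show ?thesis .
      qed
      have "(\<Sum>u\<in>S. ent (p u + t*(r u - p u)) (p u)) = (\<Sum>u\<in>S. p u * ((1 + t*c u)*ln(1 + t*c u) - t*c u)) + t * (\<Sum>u\<in>S. r u - p u)"
        by (simp add: tm sum.distrib sum_distrib_left)
      also have "(\<Sum>u\<in>S. r u - p u) = 0" using sr by (simp add: sum_subtractf)
      finally show ?case by (simp add: sum_divide_distrib mult.assoc)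
    qed
  qed
  show ?thesis using Lim_transform_eventually[OF lim ev] by (simp only: rhs)
qed

context chan begin

lemma chan_out_lin: "chan_out S W (\<lambda>u. P u + t*(R u - P u)) v = chan_out S W P v + t*(chan_out S W R v - chan_out S W P v)"
  unfolding chan_out_def by (simp add: algebra_simps sum.distrib sum_distrib_left sum_subtractf)

lemma partA:
  assumes R: "is_pmf S R" and chi: "0 < chi2_div S R P"
  shows "chi2_div T (chan_out S W R) (chan_out S W P) / chi2_div S R P \<le> eta_KL S T P W"
proof -
  have R0: "\<And>u. u \<in> S \<Longrightarrow> 0 \<le> R u" and R1: "sum R S = 1" using R by (auto simp: is_pmf_def)
  define Rt where "Rt t = (\<lambda>u. P u + t*(R u - P u))" for t
  define fin where "fin t = kl_div S (Rt t) P" for t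
  define fout where "fout t = kl_div T (chan_out S W (Rt t)) (chan_out S W P)" for t
  let ?ci = "chi2_div S R P" and ?co = "chi2_div T (chan_out S W R) (chan_out S W P)"
  have sr: "sum R S = sum P S" using R1 P1 by simp
  have L1: "((\<lambda>t. fin t / t^2) \<longlongrightarrow> ?ci / 2) (at_right 0)"
    unfolding fin_def kl_ent Rt_def chi2_div_def
    by (rule kl_lim[OF finS P0 R0 sr])
  have L2: "((\<lambda>t. fout t / t^2) \<longlongrightarrow> ?co / 2) (at_right 0)"
    unfolding fout_def kl_ent Rt_def chi2_div_def chan_out_lin
    by (rule kl_lim[OF finT WP0 chan_out_nonneg[OF R0]]) (simp_all add: chan_out_sum R1 P1)
  have L3: "((\<lambda>t. (fout t / t^2) / (fin t / t^2)) \<longlongrightarrow> (?co / 2) / (?ci / 2)) (at_right 0)"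
    by (rule tendsto_divide[OF L2 L1]) (use chi in simp)
  have ev1: "eventually (\<lambda>t. t \<in> {0<..<1::real}) (at_right 0)" by (rule eventually_at_right_real) simp
  have ev2: "eventually (\<lambda>t. 0 < fin t / t^2) (at_right 0)"
    by (rule order_tendstoD(1)[OF L1]) (use chi in simp)
  have ev: "eventually (\<lambda>t. (fout t / t^2) / (fin t / t^2) \<le> eta_KL S T P W) (at_right 0)"
    using ev1 ev2
  proof eventually_elim
    case (elim t)
    then have t: "0 < t" "t < 1" and f0: "0 < fin t" by (auto simp: zero_less_divide_iff)
    have pmf: "is_pmf S (Rt t)"
    proof -
      have "\<forall>u\<in>S. 0 \<le> Rt t u"
      proof
        fix u assume u: "u \<in> S"
        have "0 \<le> t * R u" using t R0[OF u] by simp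
        moreover have "0 \<le> (1 - t) * P u" using t P0[OF u] by simp
        ultimately show "0 \<le> Rt t u" by (simp add: Rt_def algebra_simps)
      qed
      moreover have "sum (Rt t) S = 1"
        by (simp add: Rt_def sum.distrib sum_distrib_left[symmetric] sum_subtractf R1 P1)
      ultimately show ?thesis by (simp add: is_pmf_def)
    qed
    have ac: "abs_cont S (Rt t) P" unfolding abs_cont_def
    proof (intro ballI impI)
      fix u assume "u \<in> S" "P u = 0" then show "Rt t u = 0" using P0[of u] by simp
    qed
    have "fout t / fin t \<in> {kl_div T (chan_out S W R) (chan_out S W P) / kl_div S R P | R.
      is_pmf S R \<and> abs_cont S R P \<and> 0 < kl_div S R P}"
      using pmf ac f0 unfolding fout_def fin_def by blast
    then have "fout t / fin t \<le> eta_KL S T P W"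
      unfolding eta_KL_def by (rule cSup_upper[OF _ KL_bdd])
    moreover have "(fout t / t^2) / (fin t / t^2) = fout t / fin t" using t by simp
    ultimately show ?case by (simp only:)
  qed
  have "(?co / 2) / (?ci / 2) \<le> eta_KL S T P W"
    by (rule tendsto_upperbound[OF L3 ev]) simp
  then show ?thesis by simp
qed

end

lemma decomp:
  assumes fin: "finite B" and x0: "\<And>b. b \<in> B \<Longrightarrow> 0 \<le> x b" and y0: "0 < y" and z0: "\<And>b. b \<in> B \<Longrightarrow> 0 < z b"
  shows "(\<Sum>b\<in>B. ent (x b) (y * z b)) = ent (sum x B) y + (\<Sum>b\<in>B. ent (x b) (sum x B * z b))"
proof (cases "sum x B = 0")
  case True
  then have "\<forall>b\<in>B. x b = 0" using sum_nonneg_eq_0_iff[OF fin x0] by simp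
  then show ?thesis using True by (simp add: ent_def)
next
  case False
  have "0 \<le> sum x B" using x0 by (rule sum_nonneg)
  then have X: "0 < sum x B" using False by simp
  have tm: "ent (x b) (y * z b) = x b * ln (sum x B / y) + ent (x b) (sum x B * z b)" if b: "b \<in> B" for b
  proof (cases "x b = 0")
    case True then show ?thesis by (simp add: ent_def)
  next
    case False
    then have xb: "0 < x b" using x0[OF b] by simp
    have "ln (x b / (y * z b)) = ln (sum x B / y) + ln (x b / (sum x B * z b))"
      using xb X y0 z0[OF b] by (simp add: ln_div ln_mult)
    then show ?thesis using False by (simp add: ent_def algebra_simps)
  qed
  have "(\<Sum>b\<in>B. ent (x b) (y * z b)) = (\<Sum>b\<in>B. x b * ln (sum x B / y)) + (\<Sum>b\<in>B. ent (x b) (sum x B * z b))"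
    by (simp add: tm sum.distrib)
  also have "(\<Sum>b\<in>B. x b * ln (sum x B / y)) = ent (sum x B) y"
    using False by (simp add: ent_def sum_distrib_right[symmetric])
  finally show ?thesis .
qed

definition Hc :: "'a set \<Rightarrow> 'b set \<Rightarrow> ('a \<Rightarrow> 'b \<Rightarrow> real) \<Rightarrow> ('a \<Rightarrow> real) \<Rightarrow> real \<Rightarrow> bool" where
  "Hc S T W P k \<longleftrightarrow> (\<forall>s. (\<forall>u\<in>S. 0 \<le> s u) \<longrightarrow>
     (\<Sum>v\<in>T. ent (chan_out S W s v) (sum s S * chan_out S W P v)) \<le> k * (\<Sum>u\<in>S. ent (s u) (sum s S * P u)))"

lemma HcD: "Hc S T W P k \<Longrightarrow> (\<And>u. u \<in> S \<Longrightarrow> 0 \<le> s u) \<Longrightarrow>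
     (\<Sum>v\<in>T. ent (chan_out S W s v) (sum s S * chan_out S W P v)) \<le> k * (\<Sum>u\<in>S. ent (s u) (sum s S * P u))"
  unfolding Hc_def by blast

lemma pair_tensor:
  assumes c1: "chan S1 T1 W1 P1" and c2: "chan S2 T2 W2 P2" and k0: "0 \<le> k"
    and H1: "Hc S1 T1 W1 P1 k" and H2: "Hc S2 T2 W2 P2 k"
    and s0: "\<And>a b. a \<in> S1 \<Longrightarrow> b \<in> S2 \<Longrightarrow> 0 \<le> s a b"
  shows "(\<Sum>c\<in>T1. \<Sum>d\<in>T2. ent (\<Sum>a\<in>S1. \<Sum>b\<in>S2. W1 a c * W2 b d * s a b)
            ((\<Sum>a\<in>S1. \<Sum>b\<in>S2. s a b) * (chan_out S1 W1 P1 c * chan_out S2 W2 P2 d)))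
         \<le> k * (\<Sum>a\<in>S1. \<Sum>b\<in>S2. ent (s a b) ((\<Sum>a\<in>S1. \<Sum>b\<in>S2. s a b) * (P1 a * P2 b)))"
proof -
  interpret c1: chan S1 T1 W1 P1 by (rule c1)
  interpret c2: chan S2 T2 W2 P2 by (rule c2)
  define s1 where "s1 a = (\<Sum>b\<in>S2. s a b)" for a
  define M where "M = (\<Sum>a\<in>S1. s1 a)"
  define Q where "Q c d = (\<Sum>a\<in>S1. \<Sum>b\<in>S2. W1 a c * W2 b d * s a b)" for c d
  define sg where "sg c b = (\<Sum>a\<in>S1. W1 a c * s a b)" for c b
  define Q1 where "Q1 c = chan_out S1 W1 s1 c" for c
  have Mdef: "(\<Sum>a\<in>S1. \<Sum>b\<in>S2. s a b) = M" by (simp add: M_def s1_def)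
  have s10: "\<And>a. a \<in> S1 \<Longrightarrow> 0 \<le> s1 a" unfolding s1_def by (intro sum_nonneg s0)
  have M0: "0 \<le> M" unfolding M_def by (intro sum_nonneg s10)
  have sg0: "\<And>c b. c \<in> T1 \<Longrightarrow> b \<in> S2 \<Longrightarrow> 0 \<le> sg c b"
    unfolding sg_def by (intro sum_nonneg mult_nonneg_nonneg c1.W0 s0)
  have Qsg: "Q c d = chan_out S2 W2 (sg c) d" for c d
  proof -
    have "Q c d = (\<Sum>b\<in>S2. \<Sum>a\<in>S1. W1 a c * W2 b d * s a b)" unfolding Q_def by (rule sum.swap)
    also have "\<dots> = chan_out S2 W2 (sg c) d" unfolding chan_out_def sg_def
      by (simp add: sum_distrib_left mult_ac)
    finally show ?thesis .
  qed
  have sgsum: "sum (sg c) S2 = Q1 c" for c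
  proof -
    have "sum (sg c) S2 = (\<Sum>a\<in>S1. \<Sum>b\<in>S2. W1 a c * s a b)" unfolding sg_def by (rule sum.swap)
    also have "\<dots> = Q1 c" unfolding Q1_def chan_out_def s1_def by (simp add: sum_distrib_left mult_ac)
    finally show ?thesis .
  qed
  have Q0: "\<And>c d. c \<in> T1 \<Longrightarrow> d \<in> T2 \<Longrightarrow> 0 \<le> Q c d"
    unfolding Qsg by (intro c2.chan_out_nonneg sg0) auto
  have Q1sum: "sum (Q c) T2 = Q1 c" if "c \<in> T1" for c
    using c2.chan_out_sum[of "sg c"] sgsum by (simp add: Qsg[abs_def])
  show ?thesis
  proof (cases "M = 0")
    case True
    then have "\<forall>a\<in>S1. s1 a = 0" using sum_nonneg_eq_0_iff[OF c1.finS s10] by (simp add: M_def)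
    then have z: "\<forall>a\<in>S1. \<forall>b\<in>S2. s a b = 0"
    proof (intro ballI)
      fix a b assume h: "\<forall>a\<in>S1. s1 a = 0" and a: "a \<in> S1" and b: "b \<in> S2"
      have "sum (s a) S2 = 0" using h a by (simp add: s1_def)
      then show "s a b = 0" using sum_nonneg_eq_0_iff[OF c2.finS, of "s a"] s0[OF a] b by simp
    qed
    then show ?thesis by (simp add: ent_def)
  next
    case False
    then have Mp: "0 < M" using M0 by simp
    have out: "(\<Sum>d\<in>T2. ent (Q c d) (M * (chan_out S1 W1 P1 c * chan_out S2 W2 P2 d)))
       = ent (Q1 c) (M * chan_out S1 W1 P1 c) + (\<Sum>d\<in>T2. ent (Q c d) (Q1 c * chan_out S2 W2 P2 d))"
      if c: "c \<in> T1" for c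
    proof -
      have "(\<Sum>d\<in>T2. ent (Q c d) (M * (chan_out S1 W1 P1 c * chan_out S2 W2 P2 d)))
          = (\<Sum>d\<in>T2. ent (Q c d) ((M * chan_out S1 W1 P1 c) * chan_out S2 W2 P2 d))" by (simp add: mult.assoc)
      also have "\<dots> = ent (sum (Q c) T2) (M * chan_out S1 W1 P1 c) + (\<Sum>d\<in>T2. ent (Q c d) (sum (Q c) T2 * chan_out S2 W2 P2 d))"
        by (rule decomp[OF c2.finT]) (use Q0 c Mp c1.WP0 c2.WP0 in auto)
      finally show ?thesis using Q1sum[OF c] by simp
    qed
    have inner: "(\<Sum>d\<in>T2. ent (Q c d) (Q1 c * chan_out S2 W2 P2 d))
        \<le> k * (\<Sum>a\<in>S1. W1 a c * (\<Sum>b\<in>S2. ent (s a b) (s1 a * P2 b)))"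
      if c: "c \<in> T1" for c
    proof -
      have lsum: "(\<Sum>b\<in>S2. ent (sg c b) (sum (sg c) S2 * P2 b)) \<le> (\<Sum>b\<in>S2. \<Sum>a\<in>S1. W1 a c * ent (s a b) (s1 a * P2 b))"
      proof (rule sum_mono)
        fix b assume b: "b \<in> S2"
        have "sum (sg c) S2 * P2 b = (\<Sum>a\<in>S1. W1 a c * (s1 a * P2 b))"
          unfolding sgsum Q1_def chan_out_def by (simp add: sum_distrib_right sum_distrib_left mult_ac)
        then have "ent (sg c b) (sum (sg c) S2 * P2 b) = ent (\<Sum>a\<in>S1. W1 a c * s a b) (\<Sum>a\<in>S1. W1 a c * (s1 a * P2 b))"
          by (simp add: sg_def)
        also have "\<dots> \<le> (\<Sum>a\<in>S1. ent (W1 a c * s a b) (W1 a c * (s1 a * P2 b)))"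
        proof (rule logsum[OF c1.finS])
          fix a assume a: "a \<in> S1"
          show "0 \<le> W1 a c * s a b" using c1.W0[OF a c] s0[OF a b] by simp
          show "0 \<le> W1 a c * (s1 a * P2 b)" using c1.W0[OF a c] s10[OF a] c2.P0[OF b] by simp
          show "W1 a c * (s1 a * P2 b) = 0 \<Longrightarrow> W1 a c * s a b = 0"
          proof -
            assume e: "W1 a c * (s1 a * P2 b) = 0"
            show "W1 a c * s a b = 0"
            proof (cases "W1 a c = 0")
              case False
              then have "s1 a = 0" using e c2.P0[OF b] by simp
              then have "\<forall>b\<in>S2. s a b = 0" using sum_nonneg_eq_0_iff[OF c2.finS, of "s a"] s0[OF a] by (simp add: s1_def)
              then show ?thesis using b by simp
            qed simp
          qed
        qed
        also have "\<dots> = (\<Sum>a\<in>S1. W1 a c * ent (s a b) (s1 a * P2 b))"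
          by (intro sum.cong refl ent_homog c1.W0 c)
        finally show "ent (sg c b) (sum (sg c) S2 * P2 b) \<le> (\<Sum>a\<in>S1. W1 a c * ent (s a b) (s1 a * P2 b))" .
      qed
      have "(\<Sum>d\<in>T2. ent (Q c d) (Q1 c * chan_out S2 W2 P2 d))
          = (\<Sum>d\<in>T2. ent (chan_out S2 W2 (sg c) d) (sum (sg c) S2 * chan_out S2 W2 P2 d))"
        by (simp add: Qsg sgsum)
      also have "\<dots> \<le> k * (\<Sum>b\<in>S2. ent (sg c b) (sum (sg c) S2 * P2 b))"
        by (rule HcD[OF H2]) (use sg0 c in auto)
      also have "k * (\<Sum>b\<in>S2. ent (sg c b) (sum (sg c) S2 * P2 b)) \<le> k * (\<Sum>b\<in>S2. \<Sum>a\<in>S1. W1 a c * ent (s a b) (s1 a * P2 b))"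
        by (rule mult_left_mono[OF lsum k0])
      also have "k * (\<Sum>b\<in>S2. \<Sum>a\<in>S1. W1 a c * ent (s a b) (s1 a * P2 b)) = k * (\<Sum>a\<in>S1. W1 a c * (\<Sum>b\<in>S2. ent (s a b) (s1 a * P2 b)))"
        by (subst sum.swap) (simp add: sum_distrib_left)
      finally show ?thesis .
    qed
    have step4: "(\<Sum>c\<in>T1. \<Sum>a\<in>S1. W1 a c * (\<Sum>b\<in>S2. ent (s a b) (s1 a * P2 b))) = (\<Sum>a\<in>S1. \<Sum>b\<in>S2. ent (s a b) (s1 a * P2 b))"
    proof -
      have "(\<Sum>c\<in>T1. \<Sum>a\<in>S1. W1 a c * (\<Sum>b\<in>S2. ent (s a b) (s1 a * P2 b))) = (\<Sum>a\<in>S1. \<Sum>c\<in>T1. W1 a c * (\<Sum>b\<in>S2. ent (s a b) (s1 a * P2 b)))"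
        by (rule sum.swap)
      also have "\<dots> = (\<Sum>a\<in>S1. \<Sum>b\<in>S2. ent (s a b) (s1 a * P2 b))"
      proof (rule sum.cong[OF refl])
        fix a assume a: "a \<in> S1"
        show "(\<Sum>c\<in>T1. W1 a c * (\<Sum>b\<in>S2. ent (s a b) (s1 a * P2 b))) = (\<Sum>b\<in>S2. ent (s a b) (s1 a * P2 b))"
          by (subst sum_distrib_right[symmetric]) (simp add: c1.W1[OF a])
      qed
      finally show ?thesis .
    qed
    have step5: "(\<Sum>c\<in>T1. ent (Q1 c) (M * chan_out S1 W1 P1 c)) \<le> k * (\<Sum>a\<in>S1. ent (s1 a) (M * P1 a))"
      using HcD[OF H1 s10] unfolding Q1_def M_def by simp
    have step6: "(\<Sum>a\<in>S1. \<Sum>b\<in>S2. ent (s a b) (M * (P1 a * P2 b)))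
        = (\<Sum>a\<in>S1. ent (s1 a) (M * P1 a)) + (\<Sum>a\<in>S1. \<Sum>b\<in>S2. ent (s a b) (s1 a * P2 b))"
    proof -
      have "(\<Sum>a\<in>S1. \<Sum>b\<in>S2. ent (s a b) (M * (P1 a * P2 b)))
          = (\<Sum>a\<in>S1. ent (s1 a) (M * P1 a) + (\<Sum>b\<in>S2. ent (s a b) (s1 a * P2 b)))"
      proof (rule sum.cong[OF refl])
        fix a assume a: "a \<in> S1"
        have "(\<Sum>b\<in>S2. ent (s a b) (M * (P1 a * P2 b))) = (\<Sum>b\<in>S2. ent (s a b) ((M * P1 a) * P2 b))"
          by (simp add: mult.assoc)
        also have "\<dots> = ent (sum (s a) S2) (M * P1 a) + (\<Sum>b\<in>S2. ent (s a b) (sum (s a) S2 * P2 b))"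
          by (rule decomp[OF c2.finS]) (use s0 a Mp c1.P0 c2.P0 in auto)
        finally show "(\<Sum>b\<in>S2. ent (s a b) (M * (P1 a * P2 b))) = ent (s1 a) (M * P1 a) + (\<Sum>b\<in>S2. ent (s a b) (s1 a * P2 b))"
          by (simp add: s1_def)
      qed
      then show ?thesis by (simp add: sum.distrib)
    qed
    have "(\<Sum>c\<in>T1. \<Sum>d\<in>T2. ent (Q c d) (M * (chan_out S1 W1 P1 c * chan_out S2 W2 P2 d)))
       = (\<Sum>c\<in>T1. ent (Q1 c) (M * chan_out S1 W1 P1 c)) + (\<Sum>c\<in>T1. \<Sum>d\<in>T2. ent (Q c d) (Q1 c * chan_out S2 W2 P2 d))"
      by (simp add: out sum.distrib)
    also have "\<dots> \<le> k * (\<Sum>a\<in>S1. ent (s1 a) (M * P1 a)) + (\<Sum>c\<in>T1. k * (\<Sum>a\<in>S1. W1 a c * (\<Sum>b\<in>S2. ent (s a b) (s1 a * P2 b))))"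
      by (intro add_mono step5 sum_mono inner)
    also have "\<dots> = k * (\<Sum>a\<in>S1. ent (s1 a) (M * P1 a)) + k * (\<Sum>c\<in>T1. \<Sum>a\<in>S1. W1 a c * (\<Sum>b\<in>S2. ent (s a b) (s1 a * P2 b)))"
      by (simp only: sum_distrib_left)
    also have "\<dots> = k * (\<Sum>a\<in>S1. ent (s1 a) (M * P1 a)) + k * (\<Sum>a\<in>S1. \<Sum>b\<in>S2. ent (s a b) (s1 a * P2 b))"
      by (simp only: step4)
    also have "\<dots> = k * (\<Sum>a\<in>S1. \<Sum>b\<in>S2. ent (s a b) (M * (P1 a * P2 b)))"
      by (simp only: step6 distrib_left)
    finally show ?thesis unfolding Mdef Q_def .
  qed
qed

lemma finite_seqs: "finite (seqs n :: 'a::finite list set)"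
  using finite_lists_length_eq[of "UNIV::'a set" n] by (simp add: seqs_def)

lemma seqs_0: "seqs 0 = {[]}" by (auto simp: seqs_def)

lemma Cons_in_seqs: "(x # xs \<in> seqs (Suc n)) = (xs \<in> seqs n)" by (simp add: seqs_def)

lemma seqs_Suc_sum: "sum F (seqs (Suc n)) = (\<Sum>x\<in>(UNIV::'a::finite set). \<Sum>xs\<in>seqs n. F (x#xs))"
proof -
  have img: "seqs (Suc n) = (\<lambda>(x,xs). x#xs) ` (UNIV \<times> seqs n)"
    by (force simp: seqs_def length_Suc_conv)
  have inj: "inj_on (\<lambda>(x,xs). x#xs) (UNIV \<times> seqs n :: ('a \<times> 'a list) set)" by (auto simp: inj_on_def)
  have "sum F (seqs (Suc n)) = (\<Sum>p\<in>UNIV \<times> seqs n. F ((\<lambda>(x,xs). x#xs) p))"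
    unfolding img by (rule sum.reindex[OF inj, unfolded comp_def])
  also have "\<dots> = (\<Sum>x\<in>UNIV. \<Sum>xs\<in>seqs n. F (x#xs))"
    by (simp add: sum.cartesian_product split_def)
  finally show ?thesis .
qed

lemma iid_input_Cons: "iid_input PXY (x#xs) = margX PXY x * iid_input PXY xs"
  unfolding iid_input_def by (simp only: length_Cons prod.lessThan_Suc_shift) simp

lemma iid_channel_Cons: "iid_channel PXY (x#xs) (y#ys) = PXY x y / margX PXY x * iid_channel PXY xs ys"
  unfolding iid_channel_def by (simp only: length_Cons prod.lessThan_Suc_shift) simp

lemma iid_Nil: "iid_input PXY [] = 1" "iid_channel PXY [] ys = 1"
  by (simp_all add: iid_input_def iid_channel_def)

definition Wc :: "('x \<Rightarrow> 'y::finite \<Rightarrow> real) \<Rightarrow> 'x \<Rightarrow> 'y \<Rightarrow> real" where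
  "Wc PXY x y = PXY x y / margX PXY x"

lemma chan_out_Cons: fixes PXY :: "'x::finite \<Rightarrow> 'y::finite \<Rightarrow> real" shows "chan_out (seqs (Suc n)) (iid_channel PXY) s (y#ys)
   = (\<Sum>x\<in>UNIV. \<Sum>xs\<in>seqs n. Wc PXY x y * iid_channel PXY xs ys * s (x#xs))"
  unfolding chan_out_def by (subst seqs_Suc_sum) (simp add: iid_channel_Cons Wc_def)


locale iid =
  fixes PXY :: "'x::finite \<Rightarrow> 'y::finite \<Rightarrow> real"
  assumes nn: "\<forall>x y. 0 \<le> PXY x y" and tot: "(\<Sum>x\<in>UNIV. \<Sum>y\<in>UNIV. PXY x y) = 1"
    and mx: "\<forall>x. 0 < margX PXY x" and my: "\<forall>y. 0 < margY PXY y"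
begin

lemma nz: "margX PXY x \<noteq> 0" using mx by (metis less_irrefl)

lemma chan1: "chan UNIV UNIV (Wc PXY) (margX PXY)"
proof
  show "finite (UNIV :: 'x set)" "finite (UNIV :: 'y set)" by simp_all
  fix u :: 'x
  show "\<And>v. 0 \<le> Wc PXY u v" unfolding Wc_def using nn mx by (auto intro!: divide_nonneg_pos)
  show "sum (Wc PXY u) UNIV = 1" using mx
    by (simp add: Wc_def sum_divide_distrib[symmetric] margX_def[symmetric] less_imp_neq[symmetric])
  show "0 < margX PXY u" using mx by simp
next
  show "sum (margX PXY) UNIV = 1" using tot by (simp add: margX_def)
  fix v :: 'y
  have "chan_out UNIV (Wc PXY) (margX PXY) v = margY PXY v"
    unfolding chan_out_def Wc_def margY_def using mx by (intro sum.cong) (auto simp: less_imp_neq[symmetric])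
  then show "0 < chan_out UNIV (Wc PXY) (margX PXY) v" using my by simp
qed

lemma in_pos: "0 < iid_input PXY xs"
  unfolding iid_input_def using mx by (intro prod_pos) auto

lemma in_sum: "sum (iid_input PXY) (seqs n) = 1"
proof (induction n)
  case 0 then show ?case by (simp add: seqs_0 iid_Nil)
next
  case (Suc n)
  have "sum (iid_input PXY) (seqs (Suc n)) = (\<Sum>x\<in>UNIV. margX PXY x * sum (iid_input PXY) (seqs n))"
    by (simp add: seqs_Suc_sum iid_input_Cons sum_distrib_left)
  also have "\<dots> = 1" using Suc chan.P1[OF chan1] by simp
  finally show ?case .
qed

lemma ch_nonneg: "0 \<le> iid_channel PXY xs ys"
  unfolding iid_channel_def using nn mx by (intro prod_nonneg) (auto intro: divide_nonneg_pos)

lemma ch_sum: "xs \<in> seqs n \<Longrightarrow> sum (iid_channel PXY xs) (seqs n) = 1"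
proof (induction n arbitrary: xs)
  case 0 then show ?case by (simp add: seqs_0 iid_Nil)
next
  case (Suc n)
  then obtain x xs' where xs: "xs = x # xs'" and xs': "xs' \<in> seqs n" by (cases xs) (auto simp: seqs_def)
  have "sum (iid_channel PXY xs) (seqs (Suc n)) = (\<Sum>y\<in>UNIV. Wc PXY x y * sum (iid_channel PXY xs') (seqs n))"
    by (simp add: xs seqs_Suc_sum iid_channel_Cons sum_distrib_left Wc_def)
  also have "\<dots> = 1" using Suc.IH[OF xs'] chan.W1[OF chan1] by simp
  finally show ?case .
qed

lemma out_Cons_P: "chan_out (seqs (Suc n)) (iid_channel PXY) (iid_input PXY) (y#ys)
   = chan_out UNIV (Wc PXY) (margX PXY) y * chan_out (seqs n) (iid_channel PXY) (iid_input PXY) ys"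
  unfolding chan_out_Cons iid_input_Cons unfolding chan_out_def Wc_def sum_product
  by (simp add: mult_ac nz)

lemma out_pos: "ys \<in> seqs n \<Longrightarrow> 0 < chan_out (seqs n) (iid_channel PXY) (iid_input PXY) ys"
proof (induction n arbitrary: ys)
  case 0 then show ?case by (simp add: seqs_0 iid_Nil chan_out_def)
next
  case (Suc n)
  then obtain y ys' where ys: "ys = y # ys'" and ys': "ys' \<in> seqs n" by (cases ys) (auto simp: seqs_def)
  show ?case unfolding ys out_Cons_P using Suc.IH[OF ys'] chan.WP0[OF chan1] by simp
qed

lemma chan_n: "chan (seqs n) (seqs n) (iid_channel PXY) (iid_input PXY)"
proof
  show "finite (seqs n :: 'x list set)" by (rule finite_seqs)
  show "finite (seqs n :: 'y list set)" by (rule finite_seqs)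
  show "\<And>u v. 0 \<le> iid_channel PXY u v" by (rule ch_nonneg)
  show "\<And>u. u \<in> seqs n \<Longrightarrow> sum (iid_channel PXY u) (seqs n) = 1" by (rule ch_sum)
  show "\<And>u. 0 < iid_input PXY u" by (rule in_pos)
  show "sum (iid_input PXY) (seqs n) = 1" by (rule in_sum)
  show "\<And>v. v \<in> seqs n \<Longrightarrow> 0 < chan_out (seqs n) (iid_channel PXY) (iid_input PXY) v" by (rule out_pos)
qed

lemma H_all:
  assumes H1: "Hc UNIV UNIV (Wc PXY) (margX PXY) k" and k0: "0 \<le> k"
  shows "Hc (seqs n) (seqs n) (iid_channel PXY) (iid_input PXY) k"
proof (induction n)
  case 0
  show ?case unfolding Hc_def
  proof (intro allI impI)
    fix s :: "'x list \<Rightarrow> real"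
    have e: "ent a a = 0" for a by (simp add: ent_def)
    show "(\<Sum>v\<in>seqs 0. ent (chan_out (seqs 0) (iid_channel PXY) s v) (sum s (seqs 0) * chan_out (seqs 0) (iid_channel PXY) (iid_input PXY) v))
        \<le> k * (\<Sum>u\<in>seqs 0. ent (s u) (sum s (seqs 0) * iid_input PXY u))"
      by (simp add: seqs_0 chan_out_def iid_Nil e)
  qed
next
  case (Suc n)
  show ?case unfolding Hc_def
  proof (intro allI impI)
    fix s' :: "'x list \<Rightarrow> real"
    assume s'0: "\<forall>u\<in>seqs (Suc n). 0 \<le> s' u"
    define s where "s a b = s' (a#b)" for a b
    have s0: "\<And>a b. a \<in> UNIV \<Longrightarrow> b \<in> seqs n \<Longrightarrow> 0 \<le> s a b" using s'0 by (simp add: s_def Cons_in_seqs)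
    have pt: "(\<Sum>c\<in>UNIV. \<Sum>d\<in>seqs n. ent (\<Sum>a\<in>UNIV. \<Sum>b\<in>seqs n. Wc PXY a c * iid_channel PXY b d * s a b)
            ((\<Sum>a\<in>UNIV. \<Sum>b\<in>seqs n. s a b) * (chan_out UNIV (Wc PXY) (margX PXY) c * chan_out (seqs n) (iid_channel PXY) (iid_input PXY) d)))
         \<le> k * (\<Sum>a\<in>UNIV. \<Sum>b\<in>seqs n. ent (s a b) ((\<Sum>a\<in>UNIV. \<Sum>b\<in>seqs n. s a b) * (margX PXY a * iid_input PXY b)))"
      by (rule pair_tensor[OF chan1 chan_n k0 H1 Suc s0])
    have sum_s: "sum s' (seqs (Suc n)) = (\<Sum>a\<in>UNIV. \<Sum>b\<in>seqs n. s a b)" by (simp add: seqs_Suc_sum s_def)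
    show "(\<Sum>v\<in>seqs (Suc n). ent (chan_out (seqs (Suc n)) (iid_channel PXY) s' v) (sum s' (seqs (Suc n)) * chan_out (seqs (Suc n)) (iid_channel PXY) (iid_input PXY) v))
        \<le> k * (\<Sum>u\<in>seqs (Suc n). ent (s' u) (sum s' (seqs (Suc n)) * iid_input PXY u))"
      unfolding seqs_Suc_sum[where F="\<lambda>v. ent (chan_out (seqs (Suc n)) (iid_channel PXY) s' v) (sum s' (seqs (Suc n)) * chan_out (seqs (Suc n)) (iid_channel PXY) (iid_input PXY) v)"]
        seqs_Suc_sum[where F="\<lambda>u. ent (s' u) (sum s' (seqs (Suc n)) * iid_input PXY u)"]
      unfolding out_Cons_P unfolding chan_out_Cons iid_input_Cons sum_s
      using pt unfolding s_def .
  qed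
qed

end

lemma ent_le_chi_term: assumes "0 \<le> a" "0 < b" shows "ent a b \<le> (a-b)^2/b + (a - b)"
proof (cases "a = 0")
  case True then show ?thesis using assms by (simp add: ent_def power2_eq_square)
next
  case False
  then have a0: "0 < a" using assms by simp
  have "ln (a/b) \<le> a/b - 1" using a0 assms by (intro ln_le_minus_one) simp
  then have "a * ln (a/b) \<le> a * (a/b - 1)" using a0 by (simp add: mult_left_mono)
  also have "a * (a/b - 1) = (a-b)^2/b + (a - b)" using assms by (simp add: field_simps power2_eq_square)
  finally show ?thesis using False by (simp add: ent_def)
qed

lemma kl_le_chi2:
  assumes "finite S" "\<And>u. u \<in> S \<Longrightarrow> 0 \<le> Q u" "\<And>u. u \<in> S \<Longrightarrow> 0 < P u" "sum Q S = sum P S"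
  shows "kl_div S Q P \<le> chi2_div S Q P"
proof -
  have "kl_div S Q P \<le> (\<Sum>u\<in>S. (Q u - P u)^2 / P u + (Q u - P u))"
    unfolding kl_ent by (rule sum_mono, rule ent_le_chi_term) (use assms in auto)
  also have "\<dots> = chi2_div S Q P" using assms(4) by (simp add: sum.distrib sum_subtractf chi2_div_def)
  finally show ?thesis .
qed

lemma chi_term_id: fixes r p q :: real assumes "0 < p" "0 < q"
  shows "(r*q - p*q)^2/(p*q) = (r - p)^2/p * q"
  using assms by (simp add: field_simps power2_eq_square)

context iid begin

lemma chi2_embed:
  assumes R: "is_pmf UNIV R"
  shows "chi2_div UNIV (chan_out UNIV (Wc PXY) R) (chan_out UNIV (Wc PXY) (margX PXY))
     \<le> eta_chi2 (seqs (Suc m)) (seqs (Suc m)) (iid_input PXY) (iid_channel PXY) * chi2_div UNIV R (margX PXY)"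
proof -
  interpret c1: chan UNIV UNIV "Wc PXY" "margX PXY" by (rule chan1)
  interpret cn: chan "seqs (Suc m)" "seqs (Suc m)" "iid_channel PXY" "iid_input PXY" by (rule chan_n)
  interpret cm: chan "seqs m" "seqs m" "iid_channel PXY" "iid_input PXY" by (rule chan_n)
  have R0: "\<And>u. 0 \<le> R u" and R1: "sum R UNIV = 1" using R by (auto simp: is_pmf_def)
  let ?ci = "chi2_div UNIV R (margX PXY)"
  let ?co = "chi2_div UNIV (chan_out UNIV (Wc PXY) R) (chan_out UNIV (Wc PXY) (margX PXY))"
  let ?eta = "eta_chi2 (seqs (Suc m)) (seqs (Suc m)) (iid_input PXY) (iid_channel PXY)"
  show ?thesis
  proof (cases "?ci = 0")
    case True
    then show ?thesis using c1.chi2_dp[of R] c1.chi2_nonneg_out[of R] by simp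
  next
    case False
    then have ci0: "0 < ?ci" using c1.chi2_nonneg_in[of R] by simp
    define R' where "R' zs = R (hd zs) * iid_input PXY (tl zs)" for zs
    have R'C: "R' (a#b) = R a * iid_input PXY b" for a b by (simp add: R'_def)
    have pmf: "is_pmf (seqs (Suc m)) R'"
    proof -
      have "\<forall>u\<in>seqs (Suc m). 0 \<le> R' u" using R0 in_pos by (simp add: R'_def less_imp_le)
      moreover have "sum R' (seqs (Suc m)) = 1"
        by (simp add: seqs_Suc_sum R'C sum_distrib_left[symmetric] in_sum R1)
      ultimately show ?thesis by (simp add: is_pmf_def)
    qed
    have ac: "abs_cont (seqs (Suc m)) R' (iid_input PXY)" using in_pos by (auto simp: abs_cont_def less_imp_neq[symmetric])
    have Zsum: "sum (chan_out (seqs m) (iid_channel PXY) (iid_input PXY)) (seqs m) = 1"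
      using cm.chan_out_sum in_sum by simp
    have chin: "chi2_div (seqs (Suc m)) R' (iid_input PXY) = ?ci"
    proof -
      have "chi2_div (seqs (Suc m)) R' (iid_input PXY)
          = (\<Sum>a\<in>UNIV. \<Sum>b\<in>seqs m. (R a * iid_input PXY b - margX PXY a * iid_input PXY b)^2 / (margX PXY a * iid_input PXY b))"
        unfolding chi2_div_def by (simp add: seqs_Suc_sum R'C iid_input_Cons)
      also have "\<dots> = (\<Sum>a\<in>UNIV. \<Sum>b\<in>seqs m. (R a - margX PXY a)^2 / margX PXY a * iid_input PXY b)"
        using mx in_pos by (intro sum.cong refl chi_term_id) auto
      also have "\<dots> = ?ci" by (simp only: sum_distrib_left[symmetric] in_sum mult_1_right chi2_div_def)
      finally show ?thesis .
    qed
    have outR: "chan_out (seqs (Suc m)) (iid_channel PXY) R' (c#ds) = chan_out UNIV (Wc PXY) R c * chan_out (seqs m) (iid_channel PXY) (iid_input PXY) ds" for c ds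
      unfolding chan_out_Cons R'C unfolding chan_out_def sum_product by (simp add: mult_ac)
    have chout: "chi2_div (seqs (Suc m)) (chan_out (seqs (Suc m)) (iid_channel PXY) R') (chan_out (seqs (Suc m)) (iid_channel PXY) (iid_input PXY)) = ?co"
    proof -
      have "chi2_div (seqs (Suc m)) (chan_out (seqs (Suc m)) (iid_channel PXY) R') (chan_out (seqs (Suc m)) (iid_channel PXY) (iid_input PXY))
         = (\<Sum>c\<in>UNIV. \<Sum>ds\<in>seqs m. (chan_out UNIV (Wc PXY) R c * chan_out (seqs m) (iid_channel PXY) (iid_input PXY) ds
              - chan_out UNIV (Wc PXY) (margX PXY) c * chan_out (seqs m) (iid_channel PXY) (iid_input PXY) ds)^2
              / (chan_out UNIV (Wc PXY) (margX PXY) c * chan_out (seqs m) (iid_channel PXY) (iid_input PXY) ds))"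
        unfolding chi2_div_def seqs_Suc_sum outR out_Cons_P ..
      also have "\<dots> = (\<Sum>c\<in>UNIV. \<Sum>ds\<in>seqs m. (chan_out UNIV (Wc PXY) R c - chan_out UNIV (Wc PXY) (margX PXY) c)^2
              / chan_out UNIV (Wc PXY) (margX PXY) c * chan_out (seqs m) (iid_channel PXY) (iid_input PXY) ds)"
        using c1.WP0 out_pos by (intro sum.cong refl chi_term_id) auto
      also have "\<dots> = ?co" by (simp only: sum_distrib_left[symmetric] Zsum mult_1_right chi2_div_def)
      finally show ?thesis .
    qed
    have "?co / ?ci \<in> {chi2_div (seqs (Suc m)) (chan_out (seqs (Suc m)) (iid_channel PXY) R) (chan_out (seqs (Suc m)) (iid_channel PXY) (iid_input PXY)) / chi2_div (seqs (Suc m)) R (iid_input PXY) | R.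
      is_pmf (seqs (Suc m)) R \<and> abs_cont (seqs (Suc m)) R (iid_input PXY) \<and> 0 < chi2_div (seqs (Suc m)) R (iid_input PXY)}"
      using pmf ac ci0 chin chout by (metis (mono_tags, lifting) mem_Collect_eq)
    then have "?co / ?ci \<le> ?eta" unfolding eta_chi2_def by (rule cSup_upper[OF _ cn.chi2_bdd])
    then show ?thesis using ci0 by (simp add: divide_le_eq)
  qed
qed

lemma H_single:
  assumes eta0: "0 \<le> eta" and ph: "0 < ph" and m00: "0 < m0" and mle: "\<And>x. m0 \<le> margX PXY x"
    and chi: "\<And>R. is_pmf UNIV R \<Longrightarrow> chi2_div UNIV (chan_out UNIV (Wc PXY) R) (chan_out UNIV (Wc PXY) (margX PXY)) \<le> eta * chi2_div UNIV R (margX PXY)"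
    and ow: "\<And>R. is_pmf UNIV R \<Longrightarrow> ph * (\<Sum>u\<in>UNIV. (R u - margX PXY u)^2) \<le> 2 * kl_div UNIV R (margX PXY)"
  shows "Hc UNIV UNIV (Wc PXY) (margX PXY) (2 * eta / (ph * m0))"
  unfolding Hc_def
proof (intro allI impI)
  interpret c1: chan UNIV UNIV "Wc PXY" "margX PXY" by (rule chan1)
  let ?k = "2 * eta / (ph * m0)"
  fix s :: "'x \<Rightarrow> real" assume s0: "\<forall>u\<in>UNIV. 0 \<le> s u"
  define M where "M = sum s UNIV"
  have M0: "0 \<le> M" unfolding M_def using s0 by (simp add: sum_nonneg)
  show "(\<Sum>v\<in>UNIV. ent (chan_out UNIV (Wc PXY) s v) (sum s UNIV * chan_out UNIV (Wc PXY) (margX PXY) v))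
        \<le> ?k * (\<Sum>u\<in>UNIV. ent (s u) (sum s UNIV * margX PXY u))"
  proof (cases "M = 0")
    case True
    then have "\<forall>u. s u = 0" using sum_nonneg_eq_0_iff[of UNIV s] s0 by (simp add: M_def)
    then show ?thesis by (simp add: chan_out_def ent_def)
  next
    case False
    then have Mp: "0 < M" using M0 by simp
    define R where "R u = s u / M" for u
    have sR: "s u = M * R u" for u using Mp by (simp add: R_def)
    have R: "is_pmf UNIV R" using s0 Mp unfolding is_pmf_def R_def
      by (simp add: sum_divide_distrib[symmetric] M_def[symmetric])
    have R0: "\<And>u. 0 \<le> R u" using R by (simp add: is_pmf_def)
    have outs: "chan_out UNIV (Wc PXY) s v = M * chan_out UNIV (Wc PXY) R v" for v
      unfolding chan_out_def sR by (simp add: sum_distrib_left mult_ac)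
    have L: "(\<Sum>v\<in>UNIV. ent (chan_out UNIV (Wc PXY) s v) (sum s UNIV * chan_out UNIV (Wc PXY) (margX PXY) v))
        = M * kl_div UNIV (chan_out UNIV (Wc PXY) R) (chan_out UNIV (Wc PXY) (margX PXY))"
      unfolding outs M_def[symmetric] kl_ent using M0 by (simp add: ent_homog sum_distrib_left)
    have Rr: "(\<Sum>u\<in>UNIV. ent (s u) (sum s UNIV * margX PXY u)) = M * kl_div UNIV R (margX PXY)"
      unfolding sR M_def[symmetric] kl_ent using M0 by (simp add: ent_homog sum_distrib_left)
    have kin0: "0 \<le> kl_div UNIV R (margX PXY)"
      by (rule kl_nonneg) (use R0 c1.P0 c1.P1 R in \<open>auto simp: is_pmf_def\<close>)
    have "kl_div UNIV (chan_out UNIV (Wc PXY) R) (chan_out UNIV (Wc PXY) (margX PXY))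
        \<le> chi2_div UNIV (chan_out UNIV (Wc PXY) R) (chan_out UNIV (Wc PXY) (margX PXY))"
      by (rule kl_le_chi2) (use c1.chan_out_nonneg[OF R0] c1.WP0 c1.chan_out_sum R c1.P1 in \<open>auto simp: is_pmf_def\<close>)
    also have "\<dots> \<le> eta * chi2_div UNIV R (margX PXY)" by (rule chi[OF R])
    also have "\<dots> \<le> eta * ((\<Sum>u\<in>UNIV. (R u - margX PXY u)^2) / m0)"
    proof (rule mult_left_mono[OF _ eta0])
      show "chi2_div UNIV R (margX PXY) \<le> (\<Sum>u\<in>UNIV. (R u - margX PXY u)^2) / m0"
        unfolding chi2_div_def sum_divide_distrib
        by (rule sum_mono, rule divide_left_mono) (use m00 mle mx in auto)
    qed
    also have "\<dots> \<le> eta * ((2 * kl_div UNIV R (margX PXY) / ph) / m0)"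
    proof (rule mult_left_mono[OF _ eta0], rule divide_right_mono)
      show "(\<Sum>u\<in>UNIV. (R u - margX PXY u)^2) \<le> 2 * kl_div UNIV R (margX PXY) / ph"
        using ow[OF R] ph by (simp add: le_divide_eq mult.commute)
    qed (use m00 in simp)
    also have "\<dots> = ?k * kl_div UNIV R (margX PXY)" by (simp add: field_simps)
    finally have main: "kl_div UNIV (chan_out UNIV (Wc PXY) R) (chan_out UNIV (Wc PXY) (margX PXY)) \<le> ?k * kl_div UNIV R (margX PXY)" .
    show ?thesis unfolding L Rr using mult_left_mono[OF main M0] by (simp add: mult_ac)
  qed
qed

end

theorem corollary2:
  fixes PXY :: "'x::finite \<Rightarrow> 'y::finite \<Rightarrow> real" and n :: nat
  assumes "2 \<le> card (UNIV :: 'x set)" and "2 \<le> card (UNIV :: 'y set)"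
    and "\<forall>x y. 0 \<le> PXY x y" and "(\<Sum>x\<in>UNIV. \<Sum>y\<in>UNIV. PXY x y) = 1"
    and "\<forall>x. 0 < margX PXY x" and "\<forall>y. 0 < margY PXY y"
    and "1 \<le> n"
  shows "eta_chi2 (seqs n) (seqs n) (iid_input PXY) (iid_channel PXY)
           \<le> eta_KL (seqs n) (seqs n) (iid_input PXY) (iid_channel PXY)
       \<and> eta_KL (seqs n) (seqs n) (iid_input PXY) (iid_channel PXY)
           \<le> 2 * eta_chi2 (seqs n) (seqs n) (iid_input PXY) (iid_channel PXY)
             / (phi (Max {pi_set (margX PXY) A | A. A \<subseteq> UNIV}) * Min (range (margX PXY)))"
proof -
  interpret iid PXY using assms(3-6) by unfold_locales
  interpret c1: chan UNIV UNIV "Wc PXY" "margX PXY" by (rule chan1)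
  interpret cn: chan "seqs n" "seqs n" "iid_channel PXY" "iid_input PXY" by (rule chan_n)
  obtain m where nm: "n = Suc m" using assms(7) by (cases n) auto
  let ?PX = "margX PXY"
  let ?eta = "eta_chi2 (seqs n) (seqs n) (iid_input PXY) (iid_channel PXY)"
  let ?etaKL = "eta_KL (seqs n) (seqs n) (iid_input PXY) (iid_channel PXY)"
  define ps where "ps = Max {pi_set (margX PXY) A | A. A \<subseteq> UNIV}"
  define m0 where "m0 = Min (range (margX PXY))"
  obtain x0 :: 'x where True by simp
  have "UNIV \<noteq> {x0}"
  proof
    assume h: "UNIV = {x0}"
    have "card (UNIV :: 'x set) = 1" by (subst h) simp
    then show False using assms(1) by simp
  qed
  then obtain x1 where x1: "x1 \<noteq> x0" by blast
  have px0: "0 < ?PX x0" "?PX x0 < 1"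
  proof -
    show "0 < ?PX x0" using mx by simp
    have "sum ?PX {x0, x1} \<le> sum ?PX UNIV" using mx by (intro sum_mono2) (auto simp: less_imp_le)
    then have "?PX x0 + ?PX x1 \<le> 1" using x1 c1.P1 by simp
    moreover have "0 < ?PX x1" using mx by simp
    ultimately show "?PX x0 < 1" by linarith
  qed
  define rep where "rep = replicate n x0"
  have rep_in: "rep \<in> seqs n" by (simp add: rep_def seqs_def)
  define D where "D xs = (if xs = rep then 1 else 0::real)" for xs
  have Prep: "iid_input PXY rep = ?PX x0 ^ n" by (simp add: iid_input_def rep_def)
  have Prep1: "iid_input PXY rep < 1" "0 < iid_input PXY rep"
  proof -
    have "?PX x0 ^ n < 1" using px0 nm by (subst power_less_one_iff) auto
    then show "iid_input PXY rep < 1" by (simp add: Prep)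
    show "0 < iid_input PXY rep" by (rule in_pos)
  qed
  have Dpmf: "is_pmf (seqs n) D" using rep_in by (simp add: is_pmf_def D_def sum.delta' finite_seqs)
  have Dac: "abs_cont (seqs n) D (iid_input PXY)" using in_pos by (auto simp: abs_cont_def less_imp_neq[symmetric])
  have Dkl: "0 < kl_div (seqs n) D (iid_input PXY)"
  proof -
    have "kl_div (seqs n) D (iid_input PXY) = (\<Sum>xs\<in>seqs n. if xs = rep then ln (1 / iid_input PXY xs) else 0)"
      unfolding kl_div_def D_def by (intro sum.cong refl) auto
    also have "\<dots> = ln (1 / iid_input PXY rep)" using rep_in by (simp add: sum.delta' finite_seqs)
    finally show ?thesis using Prep1 by simp
  qed
  have Dchi: "0 < chi2_div (seqs n) D (iid_input PXY)"
  proof -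
    have "(D rep - iid_input PXY rep)^2 / iid_input PXY rep \<le> chi2_div (seqs n) D (iid_input PXY)"
      unfolding chi2_div_def by (rule member_le_sum) (use rep_in in_pos in \<open>auto simp: finite_seqs less_imp_le\<close>)
    moreover have "0 < (D rep - iid_input PXY rep)^2 / iid_input PXY rep" using Prep1 by (simp add: D_def)
    ultimately show ?thesis by simp
  qed
  let ?Schi = "{chi2_div (seqs n) (chan_out (seqs n) (iid_channel PXY) R) (chan_out (seqs n) (iid_channel PXY) (iid_input PXY)) / chi2_div (seqs n) R (iid_input PXY) | R.
      is_pmf (seqs n) R \<and> abs_cont (seqs n) R (iid_input PXY) \<and> 0 < chi2_div (seqs n) R (iid_input PXY)}"
  let ?SKL = "{kl_div (seqs n) (chan_out (seqs n) (iid_channel PXY) R) (chan_out (seqs n) (iid_channel PXY) (iid_input PXY)) / kl_div (seqs n) R (iid_input PXY) | R.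
      is_pmf (seqs n) R \<and> abs_cont (seqs n) R (iid_input PXY) \<and> 0 < kl_div (seqs n) R (iid_input PXY)}"
  have Dmem: "chi2_div (seqs n) (chan_out (seqs n) (iid_channel PXY) D) (chan_out (seqs n) (iid_channel PXY) (iid_input PXY)) / chi2_div (seqs n) D (iid_input PXY) \<in> ?Schi"
    using Dpmf Dac Dchi by blast
  have Schi_ne: "?Schi \<noteq> {}" using Dmem by blast
  have SKL_ne: "?SKL \<noteq> {}" using Dpmf Dac Dkl by blast
  have eta0: "0 \<le> ?eta"
  proof -
    have "chi2_div (seqs n) (chan_out (seqs n) (iid_channel PXY) D) (chan_out (seqs n) (iid_channel PXY) (iid_input PXY)) / chi2_div (seqs n) D (iid_input PXY) \<le> ?eta"
      unfolding eta_chi2_def by (rule cSup_upper[OF Dmem cn.chi2_bdd])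
    moreover have "0 \<le> chi2_div (seqs n) (chan_out (seqs n) (iid_channel PXY) D) (chan_out (seqs n) (iid_channel PXY) (iid_input PXY)) / chi2_div (seqs n) D (iid_input PXY)"
      using cn.chi2_nonneg_out cn.chi2_nonneg_in by (rule divide_nonneg_nonneg)
    ultimately show ?thesis by linarith
  qed
  have Seq: "{pi_set (margX PXY) A | A. A \<subseteq> UNIV} = (\<lambda>A. pi_set ?PX A) ` UNIV" by auto
  have Sfin: "finite {pi_set (margX PXY) A | A. A \<subseteq> UNIV}" unfolding Seq by simp
  have pis: "\<And>A. A \<subseteq> UNIV \<Longrightarrow> min (sum ?PX A) (1 - sum ?PX A) \<le> ps"
    unfolding ps_def pi_set_def[symmetric] by (rule Max_ge[OF Sfin]) blast
  have ps2: "ps \<le> 1/2"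
  proof -
    have "ps \<in> {pi_set (margX PXY) A | A. A \<subseteq> UNIV}" unfolding ps_def by (rule Max_in[OF Sfin]) blast
    then show ?thesis by (auto simp: pi_set_def min_def)
  qed
  have ps0: "0 < ps"
  proof -
    have "min (sum ?PX {x0}) (1 - sum ?PX {x0}) \<le> ps" by (rule pis) simp
    then show ?thesis using px0 by simp
  qed
  have ph: "2 \<le> phi ps" using phi_ge2[OF ps0 ps2] .
  have m0in: "m0 \<in> range ?PX" unfolding m0_def by (rule Min_in) auto
  have m00: "0 < m0" using m0in mx by auto
  have mle: "\<And>x. m0 \<le> ?PX x" unfolding m0_def by (rule Min_le) auto
  have Hs: "Hc UNIV UNIV (Wc PXY) ?PX (2 * ?eta / (phi ps * m0))"
  proof (rule H_single[OF eta0 _ m00 mle])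
    show "0 < phi ps" using ph by simp
    fix R :: "'x \<Rightarrow> real" assume R: "is_pmf UNIV R"
    show "chi2_div UNIV (chan_out UNIV (Wc PXY) R) (chan_out UNIV (Wc PXY) ?PX) \<le> ?eta * chi2_div UNIV R ?PX"
      using chi2_embed[OF R, of m] nm by simp
    show "phi ps * (\<Sum>u\<in>UNIV. (R u - ?PX u)^2) \<le> 2 * kl_div UNIV R ?PX"
      by (rule OW_final[OF _ c1.P0 c1.P1 _ _ pis ps2]) (use R in \<open>auto simp: is_pmf_def\<close>)
  qed
  have k0: "0 \<le> 2 * ?eta / (phi ps * m0)" using eta0 ph m00 by simp
  have Hn: "Hc (seqs n) (seqs n) (iid_channel PXY) (iid_input PXY) (2 * ?eta / (phi ps * m0))"
    by (rule H_all[OF Hs k0])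
  have up: "?etaKL \<le> 2 * ?eta / (phi ps * m0)"
    unfolding eta_KL_def
  proof (rule cSup_least[OF SKL_ne])
    fix x assume "x \<in> ?SKL"
    then obtain R where R: "is_pmf (seqs n) R" "0 < kl_div (seqs n) R (iid_input PXY)"
      and x: "x = kl_div (seqs n) (chan_out (seqs n) (iid_channel PXY) R) (chan_out (seqs n) (iid_channel PXY) (iid_input PXY)) / kl_div (seqs n) R (iid_input PXY)" by blast
    have R1: "sum R (seqs n) = 1" and R0: "\<And>u. u \<in> seqs n \<Longrightarrow> 0 \<le> R u" using R(1) by (auto simp: is_pmf_def)
    have "kl_div (seqs n) (chan_out (seqs n) (iid_channel PXY) R) (chan_out (seqs n) (iid_channel PXY) (iid_input PXY))
        \<le> 2 * ?eta / (phi ps * m0) * kl_div (seqs n) R (iid_input PXY)"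
      using HcD[where s=R, OF Hn R0] unfolding R1 kl_ent by simp
    then show "x \<le> 2 * ?eta / (phi ps * m0)" using R(2) x by (simp add: divide_le_eq)
  qed
  have low: "?eta \<le> ?etaKL"
    unfolding eta_chi2_def[of "seqs n"]
  proof (rule cSup_least[OF Schi_ne])
    fix x assume "x \<in> ?Schi"
    then obtain R where R: "is_pmf (seqs n) R" "0 < chi2_div (seqs n) R (iid_input PXY)"
      and x: "x = chi2_div (seqs n) (chan_out (seqs n) (iid_channel PXY) R) (chan_out (seqs n) (iid_channel PXY) (iid_input PXY)) / chi2_div (seqs n) R (iid_input PXY)" by blast
    show "x \<le> ?etaKL" unfolding x by (rule cn.partA[OF R])
  qed
  show ?thesis using up low unfolding ps_def m0_def by simp
qed

end
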